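(* Let $N>0$ and $\rho_\zeta=\frac{1}{\pi N}\int_{\mathbb C}\exp(-|\alpha-\zeta|^2/N)|\alpha\rangle\langle\alpha|\,d^2\alpha$ for $\zeta\in\mathbb C$. Let $p,q$ be non-negative integers with $1\le p+q\le k$ and $p\le q$. Then the entry of $L^R_k$ corresponding to $\frac{d^{p+q}}{d\zeta^pd\bar\zeta^q}$ (i.e. the operator $L$ with $\frac{d^{p+q}}{d\zeta^pd\bar\zeta^q}\rho_\zeta=\rho_\zeta L$) is $$\sum_{r=0}^{\min(p,q)}(-1)^{\min(p,q)-r}\binom{\max(p,q)}{\min(p,q)-r}\frac{\min(p,q)!}{r!}\,\frac{(a-\zeta)^{r+\max(0,q-p)}(a^\dagger-\bar\zeta)^{r+\max(0,p-q)}}{N^p(N+1)^{r+\max(0,q-p)}},$$ and the corresponding entry of $L^L_k$ (the operator $L$ with $\frac{d^{p+q}}{d\zeta^pd\bar\zeta^q}\rho_\zeta=L\rho_\zeta$) is $$\sum_{r=0}^{\min(p,q)}(-1)^{\min(p,q)-r}\binom{\max(p,q)}{\min(p,q)-r}\frac{\min(p,q)!}{r!}\,\frac{(a-\zeta)^{r+\max(0,q-p)}(a^\dagger-\bar\zeta)^{r+\max(0,p-q)}}{N^q(N+1)^{r+\max(0,p-q)}}.$$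
   Context: $\ell^2$ has orthonormal basis $\{e_n\}$, $a$ is the annihilation operator $ae_n=\sqrt ne_{n-1}$, $|\alpha\rangle=e^{-|\alpha|^2/2}\sum_n\frac{\alpha^n}{\sqrt{n!}}e_n$, $d^2\alpha=dx\,dy$. With $\zeta=x+\sqrt{-1}y$, $\frac{d^m}{d\zeta^nd\bar\zeta^{m-n}}=2^{-m}(\partial_x-\sqrt{-1}\partial_y)^n(\partial_x+\sqrt{-1}\partial_y)^{m-n}$. $L^R_k$ (resp. $L^L_k$) is the column vector of operators on $\ell^2$ whose entries $L$ satisfy $\frac{d^{m}}{d\zeta^{m-l}d\bar\zeta^{l}}\rho_\zeta=\rho_\zeta L$ (resp. $=L\rho_\zeta$) for $1\le m\le k$, $0\le l\le m$. *)

theory Defs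
  imports "HOL-Analysis.Analysis"
begin

text \<open>Vectors / sequences are represented by their coordinates in the orthonormal
  basis e_n, i.e. as functions nat \<Rightarrow> complex.  Operators are represented
  either by matrix elements (for rho) or as maps on coordinate sequences
  (for polynomials in a and its adjoint).\<close>

definition basis_vec :: "nat \<Rightarrow> nat \<Rightarrow> complex" where
  "basis_vec n = (\<lambda>k. if k = n then 1 else 0)"

definition coh :: "complex \<Rightarrow> nat \<Rightarrow> complex" where
  "coh \<alpha> n = complex_of_real (exp (- ((norm \<alpha>)\<^sup>2) / 2)) * \<alpha> ^ n
               / complex_of_real (sqrt (fact n))"

definition rho :: "real \<Rightarrow> complex \<Rightarrow> nat \<Rightarrow> nat \<Rightarrow> complex" where
  "rho N \<zeta> m n = complex_of_real (1 / (pi * N)) *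
     (\<integral>\<alpha>. complex_of_real (exp (- ((norm (\<alpha> - \<zeta>))\<^sup>2) / N)) * coh \<alpha> m * cnj (coh \<alpha> n) \<partial>lborel)"

definition Dx :: "(complex \<Rightarrow> complex) \<Rightarrow> complex \<Rightarrow> complex" where
  "Dx f z = vector_derivative (\<lambda>t::real. f (z + complex_of_real t)) (at 0)"

definition Dy :: "(complex \<Rightarrow> complex) \<Rightarrow> complex \<Rightarrow> complex" where
  "Dy f z = vector_derivative (\<lambda>t::real. f (z + \<i> * complex_of_real t)) (at 0)"

definition Dz :: "(complex \<Rightarrow> complex) \<Rightarrow> complex \<Rightarrow> complex" where
  "Dz f z = (Dx f z - \<i> * Dy f z) / 2"

definition Dzb :: "(complex \<Rightarrow> complex) \<Rightarrow> complex \<Rightarrow> complex" where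
  "Dzb f z = (Dx f z + \<i> * Dy f z) / 2"

text \<open>a - zeta and a^dagger - conj zeta acting on coordinate sequences
  (a e_n = sqrt n e_(n-1), a^dagger e_n = sqrt(n+1) e_(n+1)).\<close>
definition ann_m :: "complex \<Rightarrow> (nat \<Rightarrow> complex) \<Rightarrow> nat \<Rightarrow> complex" where
  "ann_m \<zeta> v k = complex_of_real (sqrt (real (k + 1))) * v (k + 1) - \<zeta> * v k"

definition cre_m :: "complex \<Rightarrow> (nat \<Rightarrow> complex) \<Rightarrow> nat \<Rightarrow> complex" where
  "cre_m \<zeta> v k = (if k = 0 then 0 else complex_of_real (sqrt (real k)) * v (k - 1)) - cnj \<zeta> * v k"

definition coef :: "nat \<Rightarrow> nat \<Rightarrow> nat \<Rightarrow> complex" where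
  "coef p q r = (-1) ^ (min p q - r) * of_nat (max p q choose (min p q - r))
                * of_nat (fact (min p q)) / of_nat (fact r)"

text \<open>Note: on nat, (q - p) is max(0, q-p).  The operator
  (a-zeta)^s (a^dagger - conj zeta)^t applies (a^dagger - conj zeta)^t first.\<close>
definition LR_op :: "real \<Rightarrow> complex \<Rightarrow> nat \<Rightarrow> nat \<Rightarrow> (nat \<Rightarrow> complex) \<Rightarrow> nat \<Rightarrow> complex" where
  "LR_op N \<zeta> p q v = (\<lambda>k. \<Sum>r = 0..min p q. coef p q r *
      ((ann_m \<zeta> ^^ (r + (q - p))) ((cre_m \<zeta> ^^ (r + (p - q))) v)) k
      / complex_of_real (N ^ p * (N + 1) ^ (r + (q - p))))"

definition LL_op :: "real \<Rightarrow> complex \<Rightarrow> nat \<Rightarrow> nat \<Rightarrow> (nat \<Rightarrow> complex) \<Rightarrow> nat \<Rightarrow> complex" where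
  "LL_op N \<zeta> p q v = (\<lambda>k. \<Sum>r = 0..min p q. coef p q r *
      ((ann_m \<zeta> ^^ (r + (q - p))) ((cre_m \<zeta> ^^ (r + (p - q))) v)) k
      / complex_of_real (N ^ q * (N + 1) ^ (r + (p - q))))"

end

theory Submission
  imports Defs "HOL-Probability.Distributions"
begin

lemma exp_ge_pow_fact:
  fixes y :: real assumes "0 \<le> y"
  shows "y ^ d / fact d \<le> exp y"
proof -
  have "y ^ d / fact d \<le> (\<Sum>n\<le>d. y ^ n / fact n)"
    using assms by (intro member_le_sum) auto
  also have "\<dots> \<le> exp y"
    using assms summable_exp_generic[of y]
    by (auto simp: exp_def divide_inverse ac_simps intro!: sum_le_suminf)
  finally show ?thesis .
qed

lemma poly_gauss_bounded:
  fixes a :: real assumes "a > 0"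
  shows "x \<ge> 0 \<Longrightarrow> x ^ d * exp (- a * x\<^sup>2) \<le> 1 + fact d / a ^ d"
proof -
  assume x: "x \<ge> 0"
  have ax: "0 \<le> a*x\<^sup>2" using assms by simp
  have "x ^ d \<le> 1 + x ^ (2*d)"
  proof (cases "x \<le> 1")
    case True then have "x ^ d \<le> 1" using x by (simp add: power_le_one)
    then show ?thesis using x by (smt (verit) zero_le_power)
  next
    case False then have "x ^ d \<le> x ^ (2*d)" by (intro power_increasing) auto
    then show ?thesis by simp
  qed
  also have "x ^ (2*d) = (a * x\<^sup>2) ^ d / a ^ d" using assms
    by (simp add: power_mult_distrib power_mult[symmetric] mult.commute)
  also have "(a * x\<^sup>2) ^ d \<le> fact d * exp (a * x\<^sup>2)"
    using exp_ge_pow_fact[OF ax, of d] assms x by (simp add: field_simps)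
  finally have "x ^ d \<le> 1 + fact d * exp (a * x\<^sup>2) / a ^ d"
    using assms by (smt (verit) divide_right_mono zero_le_power)
  then have "x ^ d * exp (- a * x\<^sup>2) \<le> (1 + fact d * exp (a * x\<^sup>2) / a ^ d) * exp (- a * x\<^sup>2)"
    by (intro mult_right_mono) auto
  also have "\<dots> = exp (- a * x\<^sup>2) + fact d / a ^ d"
    by (simp add: field_simps exp_minus)
  also have "\<dots> \<le> 1 + fact d / a ^ d" using ax by simp
  finally show ?thesis .
qed

lemma gauss_real_int:
  fixes b :: real assumes "b > 0"
  shows "integrable lborel (\<lambda>x::real. exp (- b * x\<^sup>2))"
proof -
  define \<sigma> where "\<sigma> = sqrt (1 / (2*b))"
  have "1/(2*b) > 0" using assms by simp
  then have s: "\<sigma> > 0" "\<sigma>\<^sup>2 = 1/(2*b)" unfolding \<sigma>_def by simp_all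
  have "integrable lborel (\<lambda>x. sqrt (2 * pi * \<sigma>\<^sup>2) * normal_density 0 \<sigma> x)"
    using s(1) by (auto intro!: integrable_mult_right integrable_normal_density)
  moreover have "sqrt (2 * pi * \<sigma>\<^sup>2) * normal_density 0 \<sigma> x = exp (- b * x\<^sup>2)" for x
  proof -
    have "sqrt (2 * pi * \<sigma>\<^sup>2) * normal_density 0 \<sigma> x = exp (- x\<^sup>2 / (2 * \<sigma>\<^sup>2))"
      using s(1) by (simp add: normal_density_def)
    also have "\<dots> = exp (- b * x\<^sup>2)" using assms by (simp add: s(2) field_simps)
    finally show ?thesis .
  qed
  ultimately show ?thesis by simp
qed

lemma gauss_int:
  fixes b :: real assumes "b > 0"
  shows "integrable lborel (\<lambda>z::complex. exp (- b * (norm z)\<^sup>2))"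
proof (subst integrable_iff_bounded, intro conjI)
  show "(\<lambda>z::complex. exp (- b * (norm z)\<^sup>2)) \<in> borel_measurable lborel" by measurable
  have eq: "(\<integral>\<^sup>+z. ennreal (norm (exp (- b * (norm z)\<^sup>2))) \<partial>(lborel::complex measure)) =
     (\<integral>\<^sup>+z. (\<Prod>u\<in>Basis. ennreal (exp (- b * (z \<bullet> u)\<^sup>2))) \<partial>(lborel::complex measure))"
  proof (intro nn_integral_cong)
    fix z :: complex
    have "exp (- b * (norm z)\<^sup>2) = exp (- b * (Re z)\<^sup>2) * exp (- b * (Im z)\<^sup>2)"
      by (simp add: cmod_power2 exp_add[symmetric] algebra_simps)
    then show "ennreal (norm (exp (- b * (norm z)\<^sup>2))) = (\<Prod>u\<in>Basis. ennreal (exp (- b * (z \<bullet> u)\<^sup>2)))"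
      by (simp add: Basis_complex_def inner_complex_def ennreal_mult'[symmetric])
  qed
  also have "\<dots> = (\<Prod>u\<in>(Basis::complex set). (\<integral>\<^sup>+x. ennreal (exp (- b * x\<^sup>2)) \<partial>lborel))"
    by (rule nn_integral_lborel_prod) auto
  also have "\<dots> < \<infinity>"
  proof -
    have "(\<integral>\<^sup>+x. ennreal (exp (- b * x\<^sup>2)) \<partial>lborel) < \<infinity>"
      using gauss_real_int[OF assms] unfolding integrable_iff_bounded by simp
    then show ?thesis by (simp add: Basis_complex_def ennreal_mult_less_top)
  qed
  finally show "(\<integral>\<^sup>+z. ennreal (norm (exp (- b * (norm z)\<^sup>2))) \<partial>(lborel::complex measure)) < \<infinity>" .
qed

lemma hvd_quot:
  fixes f :: "real \<Rightarrow> complex"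
  shows "(f has_vector_derivative D) (at 0) \<longleftrightarrow> ((\<lambda>h. (f h - f 0) / of_real h) \<longlongrightarrow> D) (at 0)"
proof -
  have ev: "eventually (\<lambda>h::real. h \<noteq> 0) (at 0)" by (simp add: eventually_at_filter)
  have eq: "((\<lambda>y. norm (f y - f 0 - (y - 0) *\<^sub>R D) / norm (y - 0)) \<longlongrightarrow> 0) (at 0) \<longleftrightarrow>
        ((\<lambda>h. norm ((f h - f 0) / of_real h - D)) \<longlongrightarrow> 0) (at 0)"
  proof (rule tendsto_cong, rule eventually_mono[OF ev])
    fix h :: real assume h: "h \<noteq> 0"
    have "(f h - f 0) / of_real h - D = (f h - f 0 - of_real h * D) / of_real h"
      using h by (simp add: field_simps)
    then show "norm (f h - f 0 - (h - 0) *\<^sub>R D) / norm (h - 0) = norm ((f h - f 0) / of_real h - D)"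
      by (simp add: norm_divide scaleR_conv_of_real)
  qed
  show ?thesis
    unfolding has_vector_derivative_def has_derivative_iff_norm eq
    by (simp add: bounded_linear_scaleR_left tendsto_norm_zero_iff LIM_zero_iff)
qed

lemma leibniz0:
  fixes F F' :: "real \<Rightarrow> complex \<Rightarrow> complex" and G :: "complex \<Rightarrow> real"
  assumes int: "\<And>t. integrable lborel (F t)"
  and der: "\<And>t x. ((\<lambda>s. F s x) has_vector_derivative F' t x) (at t)"
  and bnd: "\<And>t x. norm (F' t x) \<le> G x"
  and intG: "integrable lborel G"
  and meas: "F' 0 \<in> borel_measurable lborel"
  shows "((\<lambda>t. \<integral>x. F t x \<partial>lborel) has_vector_derivative (\<integral>x. F' 0 x \<partial>lborel)) (at 0)"
proof -
  have mvt: "norm (F b x - F a x) \<le> (b - a) * G x" if ab: "a < b" for a b x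
  proof -
    have cont: "continuous_on {a..b} (\<lambda>s. F s x)"
      by (intro continuous_at_imp_continuous_on ballI has_vector_derivative_continuous[OF der])
    obtain \<xi> where "\<xi> \<in> {a<..<b}" and le: "norm (F b x - F a x) \<le> norm ((b - a) *\<^sub>R F' \<xi> x)"
      using mvt_general[OF ab cont, of "\<lambda>t h. h *\<^sub>R F' t x"] der
      unfolding has_vector_derivative_def by blast
    have "norm ((b - a) *\<^sub>R F' \<xi> x) \<le> (b - a) * G x"
      using ab bnd[of \<xi> x] by (simp add: mult_left_mono)
    then show ?thesis using le by simp
  qed
  have q: "norm ((F h x - F 0 x) / of_real h) \<le> G x" if h: "h \<noteq> 0" for h x
  proof (cases "h > 0")
    case True
    then show ?thesis using mvt[of 0 h x, OF True] by (simp add: norm_divide divide_le_eq mult.commute)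
  next
    case False
    then have "h < 0" using h by simp
    have c: "norm (F 0 x - F h x) \<le> G x * (- h)"
      using mvt[of h 0 x, OF \<open>h < 0\<close>] by (simp add: algebra_simps)
    have "norm (F 0 x - F h x) / (- h) \<le> G x"
      by (metis c \<open>h < 0\<close> neg_0_less_iff_less pos_divide_le_eq)
    then show ?thesis using \<open>h < 0\<close>
      by (simp add: norm_divide norm_minus_commute)
  qed
  have lim_pt: "((\<lambda>h. (F h x - F 0 x) / of_real h) \<longlongrightarrow> F' 0 x) (at 0)" for x
    using der[where t=0 and x=x] hvd_quot[of "\<lambda>s. F s x"] by simp
  show ?thesis
    unfolding hvd_quot
  proof (subst tendsto_at_iff_sequentially, intro allI impI)
    fix X :: "nat \<Rightarrow> real"
    assume X: "\<forall>i. X i \<in> UNIV - {0}" and X0: "X \<longlonglongrightarrow> 0"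
    have fX: "filterlim X (at 0) sequentially"
      using X X0 by (auto simp: filterlim_at)
    have eq: "((\<integral>x. F (X i) x \<partial>lborel) - (\<integral>x. F 0 x \<partial>lborel)) / of_real (X i)
        = (\<integral>x. (F (X i) x - F 0 x) / of_real (X i) \<partial>lborel)" for i
      using int by simp
    show "((\<lambda>h. ((\<integral>x. F h x \<partial>lborel) - (\<integral>x. F 0 x \<partial>lborel)) / of_real h) \<circ> X) \<longlonglongrightarrow> (\<integral>x. F' 0 x \<partial>lborel)"
      unfolding comp_def eq
    proof (rule integral_dominated_convergence[where w=G])
      show "F' 0 \<in> borel_measurable lborel" by (rule meas)
      show "(\<lambda>x. (F (X i) x - F 0 x) / of_real (X i)) \<in> borel_measurable lborel" for i
        using int by measurable
      show "integrable lborel G" by (rule intG)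
      show "AE x in lborel. (\<lambda>i. (F (X i) x - F 0 x) / of_real (X i)) \<longlonglongrightarrow> F' 0 x"
        using filterlim_compose[OF lim_pt fX] by simp
      show "AE x in lborel. norm ((F (X i) x - F 0 x) / of_real (X i)) \<le> G x" for i
        using q X by auto
    qed
  qed
qed

definition Kf :: "real \<Rightarrow> complex \<Rightarrow> complex" where
  "Kf N u = complex_of_real (exp (- ((norm u)\<^sup>2) / N))"

definition gg :: "nat \<Rightarrow> nat \<Rightarrow> complex \<Rightarrow> complex" where
  "gg m n \<alpha> = coh \<alpha> m * cnj (coh \<alpha> n)"

definition TT :: "real \<Rightarrow> nat \<Rightarrow> nat \<Rightarrow> complex \<Rightarrow> nat \<Rightarrow> nat \<Rightarrow> complex" where
  "TT N i j z m n = complex_of_real (1 / (pi * N)) *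
     (\<integral>\<alpha>. Kf N (\<alpha> - z) * (\<alpha> - z) ^ i * cnj (\<alpha> - z) ^ j * gg m n \<alpha> \<partial>lborel)"

definition SS :: "real \<Rightarrow> nat \<Rightarrow> nat \<Rightarrow> complex \<Rightarrow> nat \<Rightarrow> nat \<Rightarrow> complex" where
  "SS N i j z m n = complex_of_real (1 / (pi * N)) *
     (\<integral>\<beta>. Kf N \<beta> * \<beta> ^ i * cnj \<beta> ^ j * gg m n (\<beta> + z) \<partial>lborel)"

lemma rho_TT: "rho N z m n = TT N 0 0 z m n"
  by (simp add: rho_def TT_def Kf_def gg_def mult.assoc)

lemma Kf_exp: "Kf N u = exp (- (u * cnj u) / of_real N)"
proof -
  have "Kf N u = exp (complex_of_real (- ((norm u)\<^sup>2) / N))"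
    by (simp only: Kf_def exp_of_real)
  also have "complex_of_real (- ((norm u)\<^sup>2) / N) = - (u * cnj u) / of_real N"
    by (simp add: complex_norm_square[symmetric])
  finally show ?thesis .
qed

lemma norm_Kf: "norm (Kf N u) = exp (- ((norm u)\<^sup>2) / N)"
  by (simp add: Kf_def)

lemma gg_exp: "gg m n \<alpha> = exp (- (\<alpha> * cnj \<alpha>)) * \<alpha> ^ m * cnj \<alpha> ^ n /
    complex_of_real (sqrt (fact m) * sqrt (fact n))"
proof -
  have e: "complex_of_real (exp (- (norm \<alpha>)\<^sup>2 / 2)) * complex_of_real (exp (- (norm \<alpha>)\<^sup>2 / 2))
      = exp (- (\<alpha> * cnj \<alpha>))"
    by (simp add: exp_of_real[symmetric] exp_add[symmetric] complex_norm_square[symmetric])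
  show ?thesis
    unfolding gg_def coh_def using e
    by (simp add: field_simps)
qed

lemma norm_gg: "norm (gg m n \<alpha>) = exp (- (norm \<alpha>)\<^sup>2) * norm \<alpha> ^ (m + n) / (sqrt (fact m) * sqrt (fact n))"
proof -
  have "norm (exp (- (\<alpha> * cnj \<alpha>))) = exp (- (norm \<alpha>)\<^sup>2)"
    by (simp add: complex_norm_square[symmetric] exp_of_real[symmetric] del: exp_of_real)
  then show ?thesis
    by (simp add: gg_exp norm_mult norm_divide norm_power power_add)
qed

lemma meas_coh[measurable]: "(\<lambda>\<alpha>. coh \<alpha> m) \<in> borel_measurable borel"
  unfolding coh_def by measurable

lemma meas_cnj[measurable]: "f \<in> borel_measurable M \<Longrightarrow> (\<lambda>x. cnj (f x)) \<in> borel_measurable M"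
  using borel_measurable_continuous_on[of cnj f M] continuous_on_cnj[OF continuous_on_id] by simp

lemma meas_gg[measurable]: "gg m n \<in> borel_measurable borel"
  unfolding gg_def by measurable

lemma meas_Kf[measurable]: "Kf N \<in> borel_measurable borel"
  unfolding Kf_def by measurable

lemma gb: assumes "N > 0" shows "norm u ^ d * exp (- ((norm u)\<^sup>2) / N) \<le> 1 + fact d * N ^ d"
proof -
  have "norm u ^ d * exp (- (1/N) * (norm u)\<^sup>2) \<le> 1 + fact d / (1/N) ^ d"
    using assms by (intro poly_gauss_bounded) auto
  then show ?thesis using assms by (simp add: power_one_over)
qed

lemma gb0: "N > 0 \<Longrightarrow> 0 \<le> 1 + fact d * N ^ d" for N :: real
  by (simp add: add_nonneg_nonneg)

lemma int_polygauss:
  assumes "N > 0"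
  shows "integrable lborel (\<lambda>\<beta>::complex. norm \<beta> ^ d * exp (- ((norm \<beta>)\<^sup>2) / N))"
proof (rule Bochner_Integration.integrable_bound)
  show "integrable lborel (\<lambda>\<beta>::complex. (1 + fact d * (2*N) ^ d) * exp (- (1/(2*N)) * (norm \<beta>)\<^sup>2))"
    using assms by (intro integrable_mult_right gauss_int) auto
  show "(\<lambda>\<beta>::complex. norm \<beta> ^ d * exp (- ((norm \<beta>)\<^sup>2) / N)) \<in> borel_measurable lborel" by measurable
  show "AE \<beta> in lborel. norm (norm \<beta> ^ d * exp (- ((norm \<beta>)\<^sup>2) / N))
      \<le> norm ((1 + fact d * (2*N) ^ d) * exp (- (1/(2*N)) * (norm (\<beta>::complex))\<^sup>2))"
  proof (intro AE_I2)
    fix \<beta> :: complex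
    have e: "exp (- ((norm \<beta>)\<^sup>2) / N) = exp (- ((norm \<beta>)\<^sup>2) / (2*N)) * exp (- (1/(2*N)) * (norm \<beta>)\<^sup>2)"
      using assms by (simp add: exp_add[symmetric] field_simps)
    have "norm \<beta> ^ d * exp (- ((norm \<beta>)\<^sup>2) / (2*N)) \<le> 1 + fact d * (2*N) ^ d"
      using assms by (intro gb) auto
    then have "norm \<beta> ^ d * exp (- ((norm \<beta>)\<^sup>2) / N) \<le> (1 + fact d * (2*N) ^ d) * exp (- (1/(2*N)) * (norm \<beta>)\<^sup>2)"
      unfolding e mult.assoc[symmetric] by (intro mult_right_mono) auto
    then show "norm (norm \<beta> ^ d * exp (- ((norm \<beta>)\<^sup>2) / N))
      \<le> norm ((1 + fact d * (2*N) ^ d) * exp (- (1/(2*N)) * (norm \<beta>)\<^sup>2))"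
      using assms by (simp add: abs_mult)
  qed
qed

lemma sqrt_fact_ge1: "1 \<le> sqrt (fact m)"
  by simp

lemma norm_gg_le: "norm (gg m n \<alpha>) \<le> norm \<alpha> ^ (m + n) * exp (- ((norm \<alpha>)\<^sup>2) / 1)"
proof -
  have "1 \<le> sqrt (fact m) * sqrt (fact n)"
    using sqrt_fact_ge1[of m] sqrt_fact_ge1[of n] by (metis mult_mono' mult_1 zero_le_one)
  moreover have "0 \<le> norm \<alpha> ^ (m + n) * exp (- ((norm \<alpha>)\<^sup>2))" by simp
  ultimately have "1 * (norm \<alpha> ^ (m + n) * exp (- ((norm \<alpha>)\<^sup>2))) \<le> (sqrt (fact m) * sqrt (fact n)) * (norm \<alpha> ^ (m + n) * exp (- ((norm \<alpha>)\<^sup>2)))"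
    by (rule mult_right_mono)
  then show ?thesis unfolding norm_gg
    by (simp add: divide_le_eq mult.commute)
qed

lemma int_gg: "integrable lborel (gg m n)"
proof (rule Bochner_Integration.integrable_bound[OF int_polygauss[of 1 "m+n"]])
  show "AE x in lborel. norm (gg m n x) \<le> norm (norm x ^ (m + n) * exp (- ((norm x)\<^sup>2) / 1))"
    using norm_gg_le by auto
qed auto

lemma int_TT:
  assumes "N > 0"
  shows "integrable lborel (\<lambda>\<alpha>. Kf N (\<alpha> - z) * (\<alpha> - z) ^ i * cnj (\<alpha> - z) ^ j * gg m n \<alpha>)"
proof (rule Bochner_Integration.integrable_bound)
  let ?C = "1 + fact (i+j) * N ^ (i+j)"
  show "integrable lborel (\<lambda>\<alpha>. ?C * norm (gg m n \<alpha>))"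
    by (intro integrable_mult_right integrable_norm int_gg)
  show "(\<lambda>\<alpha>. Kf N (\<alpha> - z) * (\<alpha> - z) ^ i * cnj (\<alpha> - z) ^ j * gg m n \<alpha>) \<in> borel_measurable lborel"
    by measurable
  show "AE \<alpha> in lborel. norm (Kf N (\<alpha> - z) * (\<alpha> - z) ^ i * cnj (\<alpha> - z) ^ j * gg m n \<alpha>) \<le> norm (?C * norm (gg m n \<alpha>))"
  proof (intro AE_I2)
    fix \<alpha>
    have "norm (Kf N (\<alpha> - z) * (\<alpha> - z) ^ i * cnj (\<alpha> - z) ^ j) = norm (\<alpha> - z) ^ (i+j) * exp (- ((norm (\<alpha> - z))\<^sup>2) / N)"
      by (simp add: norm_mult norm_power norm_Kf power_add del: complex_cnj_diff)
    also have "\<dots> \<le> ?C" using gb[OF assms] .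
    finally show "norm (Kf N (\<alpha> - z) * (\<alpha> - z) ^ i * cnj (\<alpha> - z) ^ j * gg m n \<alpha>) \<le> norm (?C * norm (gg m n \<alpha>))"
      using gb0[OF assms, of "i+j"]
      by (simp add: norm_mult mult_right_mono)
  qed
qed

lemma int_SS:
  assumes "N > 0"
  shows "integrable lborel (\<lambda>\<beta>. Kf N \<beta> * \<beta> ^ i * cnj \<beta> ^ j * gg m n (\<beta> + z))"
proof (rule Bochner_Integration.integrable_bound)
  let ?C = "1 + fact (m+n) * 1 ^ (m+n)"
  show "integrable lborel (\<lambda>\<beta>::complex. ?C * (norm \<beta> ^ (i+j) * exp (- ((norm \<beta>)\<^sup>2) / N)))"
    by (intro integrable_mult_right int_polygauss assms)
  show "(\<lambda>\<beta>. Kf N \<beta> * \<beta> ^ i * cnj \<beta> ^ j * gg m n (\<beta> + z)) \<in> borel_measurable lborel"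
    by measurable
  show "AE \<beta> in lborel. norm (Kf N \<beta> * \<beta> ^ i * cnj \<beta> ^ j * gg m n (\<beta> + z)) \<le> norm (?C * (norm \<beta> ^ (i+j) * exp (- ((norm \<beta>)\<^sup>2) / N)))"
  proof (intro AE_I2)
    fix \<beta>
    have "norm (gg m n (\<beta> + z)) \<le> ?C"
      using norm_gg_le[of m n "\<beta> + z"] gb[of 1 "\<beta> + z" "m+n"] by simp
    moreover have "norm (Kf N \<beta> * \<beta> ^ i * cnj \<beta> ^ j) = norm \<beta> ^ (i+j) * exp (- ((norm \<beta>)\<^sup>2) / N)"
      by (simp add: norm_mult norm_power norm_Kf power_add)
    ultimately show "norm (Kf N \<beta> * \<beta> ^ i * cnj \<beta> ^ j * gg m n (\<beta> + z)) \<le> norm (?C * (norm \<beta> ^ (i+j) * exp (- ((norm \<beta>)\<^sup>2) / N)))"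
      by (simp add: norm_mult mult.commute mult_right_mono)
  qed
qed

lemma TT_SS:
  assumes "N > 0"
  shows "TT N i j z m n = SS N i j z m n"
proof -
  let ?f = "\<lambda>\<alpha>. Kf N (\<alpha> - z) * (\<alpha> - z) ^ i * cnj (\<alpha> - z) ^ j * gg m n \<alpha>"
  have "(\<integral>\<alpha>. ?f \<alpha> \<partial>lborel) = (\<integral>\<alpha>. ?f \<alpha> \<partial>(distr lborel borel ((+) z)))"
    by (simp add: lborel_distr_plus)
  also have "\<dots> = (\<integral>\<beta>. ?f (z + \<beta>) \<partial>lborel)"
    by (rule integral_distr) auto
  finally show ?thesis unfolding TT_def SS_def by (simp add: add.commute)
qed

definition wirt :: "(complex \<Rightarrow> complex) \<Rightarrow> (complex \<Rightarrow> complex) \<Rightarrow> (complex \<Rightarrow> complex) \<Rightarrow> bool" where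
  "wirt f A B \<longleftrightarrow> (\<forall>z e. ((\<lambda>t. f (z + of_real t * e)) has_vector_derivative (e * A z + cnj e * B z)) (at 0))"

lemma wirt_D:
  assumes "wirt f A B"
  shows "Dz f = A" "Dzb f = B"
proof -
  have dx: "Dx f z = A z + B z" for z
  proof -
    have "((\<lambda>t. f (z + of_real t * 1)) has_vector_derivative (1 * A z + cnj 1 * B z)) (at 0)"
      using assms unfolding wirt_def by blast
    then show ?thesis unfolding Dx_def by (simp add: vector_derivative_at)
  qed
  have dy: "Dy f z = \<i> * A z - \<i> * B z" for z
  proof -
    have "((\<lambda>t. f (z + of_real t * \<i>)) has_vector_derivative (\<i> * A z + cnj \<i> * B z)) (at 0)"
      using assms unfolding wirt_def by blast
    then show ?thesis unfolding Dy_def by (simp add: vector_derivative_at mult.commute)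
  qed
  show "Dz f = A"
    by (rule ext) (simp add: Dz_def dx dy field_simps)
  show "Dzb f = B"
    by (rule ext) (simp add: Dzb_def dx dy field_simps)
qed

lemma wirt_unique:
  assumes "wirt f A B" "wirt f A' B'"
  shows "A = A'" "B = B'"
  using wirt_D[OF assms(1)] wirt_D[OF assms(2)] by auto

lemma wirt_cmult:
  assumes "wirt f A B"
  shows "wirt (\<lambda>z. c * f z) (\<lambda>z. c * A z) (\<lambda>z. c * B z)"
  using assms unfolding wirt_def
  by (auto intro!: has_vector_derivative_eq_rhs[OF has_vector_derivative_mult_right] simp: algebra_simps)

lemma wirt_add:
  assumes "wirt f A B" "wirt g C D"
  shows "wirt (\<lambda>z. f z + g z) (\<lambda>z. A z + C z) (\<lambda>z. B z + D z)"
  using assms unfolding wirt_def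
  by (auto intro!: has_vector_derivative_eq_rhs[OF has_vector_derivative_add] simp: algebra_simps)

lemma wirt_diff:
  assumes "wirt f A B" "wirt g C D"
  shows "wirt (\<lambda>z. f z - g z) (\<lambda>z. A z - C z) (\<lambda>z. B z - D z)"
  using assms unfolding wirt_def
  by (auto intro!: has_vector_derivative_eq_rhs[OF has_vector_derivative_diff] simp: algebra_simps)

lemma wirt_sum:
  assumes "\<And>r. r \<in> R \<Longrightarrow> wirt (f r) (A r) (B r)"
  shows "wirt (\<lambda>z. \<Sum>r\<in>R. f r z) (\<lambda>z. \<Sum>r\<in>R. A r z) (\<lambda>z. \<Sum>r\<in>R. B r z)"
  using assms unfolding wirt_def
  by (auto intro!: has_vector_derivative_eq_rhs[OF has_vector_derivative_sum] simp: algebra_simps sum_distrib_left sum.distrib)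

lemma deriv_form1:
  fixes w wb e eb c s :: complex
  shows "((\<lambda>s. exp (- (c * ((w - s*e) * (wb - s*eb)))) * (w - s*e)^i * (wb - s*eb)^j) has_field_derivative
    (exp (- (c * ((w - s*e) * (wb - s*eb)))) * ((c * (e*(wb - s*eb) + eb*(w - s*e))) * (w - s*e)^i * (wb - s*eb)^j
      - of_nat i * e * (w - s*e)^(i-1) * (wb - s*eb)^j - of_nat j * eb * (w - s*e)^i * (wb - s*eb)^(j-1)))) (at s)"
  by (rule derivative_eq_intros refl)+ (simp add: algebra_simps)

lemma deriv_form2:
  fixes v vb e eb s :: complex
  shows "((\<lambda>s. exp (- ((v + s*e) * (vb + s*eb))) * (v + s*e)^m * (vb + s*eb)^n) has_field_derivative
    (exp (- ((v + s*e) * (vb + s*eb))) * (- (e*(vb + s*eb) + eb*(v + s*e)) * (v + s*e)^m * (vb + s*eb)^n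
      + of_nat m * e * (v + s*e)^(m-1) * (vb + s*eb)^n + of_nat n * eb * (v + s*e)^m * (vb + s*eb)^(n-1)))) (at s)"
  by (rule derivative_eq_intros refl)+ (simp add: algebra_simps)

definition BB :: "real \<Rightarrow> nat \<Rightarrow> real" where "BB N d = 1 + fact d * N ^ d"

lemma gbB: "N > 0 \<Longrightarrow> norm (Kf N u) * norm u ^ d \<le> BB N d"
  using gb[of N u d] by (simp add: BB_def norm_Kf mult.commute)

lemma bound1:
  assumes N: "N > 0"
  shows "norm (Kf N u * ((c * (e * cnj u + cnj e * u)) * u^i * cnj u^j - of_nat i * e * u^(i-1) * cnj u^j
           - of_nat j * cnj e * u^i * cnj u^(j-1)))
      \<le> norm c * (2 * norm e) * BB N (i+j+1) + of_nat i * norm e * BB N (i-1+j) + of_nat j * norm e * BB N (i+(j-1))"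
proof -
  let ?K = "norm (Kf N u)" and ?r = "norm u"
  let ?A = "(c * (e * cnj u + cnj e * u)) * u^i * cnj u^j"
  let ?B = "of_nat i * e * u^(i-1) * cnj u^j"
  let ?C = "of_nat j * cnj e * u^i * cnj u^(j-1)"
  have K0: "0 \<le> ?K" by simp
  have nA: "norm ?A \<le> norm c * (2 * norm e) * ?r ^ (i+j+1)"
  proof -
    have "norm (e * cnj u + cnj e * u) \<le> 2 * norm e * ?r"
      using norm_triangle_ineq[of "e * cnj u" "cnj e * u"] by (simp add: norm_mult)
    then have "norm c * norm (e * cnj u + cnj e * u) * (?r ^ i * ?r ^ j) \<le> norm c * (2 * norm e * ?r) * (?r ^ i * ?r ^ j)"
      by (intro mult_right_mono mult_left_mono) auto
    then have "norm ?A \<le> norm c * (2 * norm e * ?r) * (?r ^ i * ?r ^ j)"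
      by (simp add: norm_mult norm_power mult.assoc)
    then show ?thesis by (simp add: power_add mult_ac)
  qed
  have nB: "norm ?B = of_nat i * norm e * ?r ^ (i-1+j)"
    by (simp add: norm_mult norm_power power_add)
  have nC: "norm ?C = of_nat j * norm e * ?r ^ (i+(j-1))"
    by (simp add: norm_mult norm_power power_add)
  have "norm (Kf N u * (?A - ?B - ?C)) \<le> ?K * (norm ?A + norm ?B + norm ?C)"
    by (simp add: norm_mult mult_left_mono norm_triangle_le_diff)
  also have "\<dots> \<le> ?K * (norm c * (2 * norm e) * ?r ^ (i+j+1) + of_nat i * norm e * ?r ^ (i-1+j) + of_nat j * norm e * ?r ^ (i+(j-1)))"
    using nA nB nC K0 by (intro mult_left_mono) auto
  also have "\<dots> = norm c * (2 * norm e) * (?K * ?r ^ (i+j+1)) + of_nat i * norm e * (?K * ?r ^ (i-1+j)) + of_nat j * norm e * (?K * ?r ^ (i+(j-1)))"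
    by (simp add: algebra_simps)
  also have "\<dots> \<le> norm c * (2 * norm e) * BB N (i+j+1) + of_nat i * norm e * BB N (i-1+j) + of_nat j * norm e * BB N (i+(j-1))"
    using gbB[OF N, of u "i+j+1"] gbB[OF N, of u "i-1+j"] gbB[OF N, of u "i+(j-1)"]
    by (intro add_mono mult_left_mono) (simp_all del: power_Suc add_Suc_right Suc_eq_plus1 add.assoc)
  finally show ?thesis .
qed

lemma W1:
  assumes N: "N > 0"
  shows "wirt (\<lambda>z. TT N i j z m n)
    (\<lambda>z. TT N i (Suc j) z m n / of_real N - of_nat i * TT N (i - 1) j z m n)
    (\<lambda>z. TT N (Suc i) j z m n / of_real N - of_nat j * TT N i (j - 1) z m n)"
  unfolding wirt_def
proof (intro allI)
  fix z e :: complex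
  define c where "c = complex_of_real (1/N)"
  define \<kappa> where "\<kappa> = complex_of_real (1 / (pi * N))"
  define U where "U t \<alpha> = \<alpha> - (z + of_real t * e)" for t :: real and \<alpha>
  define F where "F t \<alpha> = Kf N (U t \<alpha>) * U t \<alpha> ^ i * cnj (U t \<alpha>) ^ j * gg m n \<alpha>" for t \<alpha>
  define F' where "F' t \<alpha> = Kf N (U t \<alpha>) * ((c * (e * cnj (U t \<alpha>) + cnj e * U t \<alpha>)) * U t \<alpha> ^ i * cnj (U t \<alpha>) ^ j
     - of_nat i * e * U t \<alpha> ^ (i-1) * cnj (U t \<alpha>) ^ j - of_nat j * cnj e * U t \<alpha> ^ i * cnj (U t \<alpha>) ^ (j-1)) * gg m n \<alpha>" for t \<alpha>
  have Kc: "Kf N u = exp (- (c * (u * cnj u)))" for u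
    by (simp add: Kf_exp c_def)
  have der: "((\<lambda>s. F s \<alpha>) has_vector_derivative F' t \<alpha>) (at t)" for t \<alpha>
  proof -
    let ?w = "\<alpha> - z"
    let ?P = "\<lambda>s. exp (- (c * ((?w - s*e) * (cnj ?w - s*cnj e)))) * (?w - s*e)^i * (cnj ?w - s*cnj e)^j"
    let ?P' = "\<lambda>s. exp (- (c * ((?w - s*e) * (cnj ?w - s*cnj e)))) * ((c * (e*(cnj ?w - s*cnj e) + cnj e*(?w - s*e))) * (?w - s*e)^i * (cnj ?w - s*cnj e)^j
      - of_nat i * e * (?w - s*e)^(i-1) * (cnj ?w - s*cnj e)^j - of_nat j * cnj e * (?w - s*e)^i * (cnj ?w - s*cnj e)^(j-1))"
    have "((\<lambda>s. ?P s * gg m n \<alpha>) has_field_derivative ?P' (of_real t) * gg m n \<alpha>) (at (of_real t))"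
      by (rule DERIV_cmult_right, rule deriv_form1)
    from has_vector_derivative_real_field[OF this]
    have "((\<lambda>s. ?P (of_real s) * gg m n \<alpha>) has_vector_derivative ?P' (of_real t) * gg m n \<alpha>) (at t)" .
    moreover have Ue: "U s \<alpha> = ?w - of_real s * e" for s
      by (simp add: U_def algebra_simps)
    moreover have Uc: "cnj (?w - of_real s * e) = cnj ?w - of_real s * cnj e" for s
      by simp
    ultimately show ?thesis
      unfolding F_def F'_def Kc by (simp only: Ue Uc)
  qed
  have intF: "integrable lborel (F t)" for t
    unfolding F_def U_def by (rule int_TT[OF N])
  define Cst where "Cst = norm c * (2 * norm e) * BB N (i+j+1) + of_nat i * norm e * BB N (i-1+j) + of_nat j * norm e * BB N (i+(j-1))"
  have bnd: "norm (F' t \<alpha>) \<le> Cst * norm (gg m n \<alpha>)" for t \<alpha>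
  proof -
    have "norm (F' t \<alpha>) = norm (Kf N (U t \<alpha>) * ((c * (e * cnj (U t \<alpha>) + cnj e * U t \<alpha>)) * U t \<alpha> ^ i * cnj (U t \<alpha>) ^ j
     - of_nat i * e * U t \<alpha> ^ (i-1) * cnj (U t \<alpha>) ^ j - of_nat j * cnj e * U t \<alpha> ^ i * cnj (U t \<alpha>) ^ (j-1))) * norm (gg m n \<alpha>)"
      unfolding F'_def by (simp only: norm_mult)
    also have "\<dots> \<le> Cst * norm (gg m n \<alpha>)"
      unfolding Cst_def by (intro mult_right_mono bound1[OF N]) auto
    finally show ?thesis .
  qed
  have intG: "integrable lborel (\<lambda>\<alpha>. Cst * norm (gg m n \<alpha>))"
    by (intro integrable_mult_right integrable_norm int_gg)
  have measF': "F' 0 \<in> borel_measurable lborel"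
    unfolding F'_def U_def by measurable
  have L: "((\<lambda>t. \<integral>\<alpha>. F t \<alpha> \<partial>lborel) has_vector_derivative (\<integral>\<alpha>. F' 0 \<alpha> \<partial>lborel)) (at 0)"
    by (rule leibniz0[OF intF der bnd intG measF'])
  define X1 where "X1 \<alpha> = Kf N (\<alpha> - z) * (\<alpha> - z) ^ i * cnj (\<alpha> - z) ^ Suc j * gg m n \<alpha>" for \<alpha>
  define X2 where "X2 \<alpha> = Kf N (\<alpha> - z) * (\<alpha> - z) ^ Suc i * cnj (\<alpha> - z) ^ j * gg m n \<alpha>" for \<alpha>
  define X3 where "X3 \<alpha> = Kf N (\<alpha> - z) * (\<alpha> - z) ^ (i - 1) * cnj (\<alpha> - z) ^ j * gg m n \<alpha>" for \<alpha>
  define X4 where "X4 \<alpha> = Kf N (\<alpha> - z) * (\<alpha> - z) ^ i * cnj (\<alpha> - z) ^ (j - 1) * gg m n \<alpha>" for \<alpha>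
  have iX: "integrable lborel X1" "integrable lborel X2" "integrable lborel X3" "integrable lborel X4"
    unfolding X1_def X2_def X3_def X4_def by (rule int_TT[OF N])+
  have F'0: "F' 0 \<alpha> = (e * c) * X1 \<alpha> + (cnj e * c) * X2 \<alpha> - (of_nat i * e) * X3 \<alpha> - (of_nat j * cnj e) * X4 \<alpha>" for \<alpha>
    unfolding F'_def U_def X1_def X2_def X3_def X4_def
    by (simp add: algebra_simps del: complex_cnj_diff)
  have IF': "(\<integral>\<alpha>. F' 0 \<alpha> \<partial>lborel) = (e * c) * (\<integral>\<alpha>. X1 \<alpha> \<partial>lborel) + (cnj e * c) * (\<integral>\<alpha>. X2 \<alpha> \<partial>lborel)
      - (of_nat i * e) * (\<integral>\<alpha>. X3 \<alpha> \<partial>lborel) - (of_nat j * cnj e) * (\<integral>\<alpha>. X4 \<alpha> \<partial>lborel)"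
    unfolding F'0 using iX by simp
  have TTs: "TT N i (Suc j) z m n = \<kappa> * (\<integral>\<alpha>. X1 \<alpha> \<partial>lborel)" "TT N (Suc i) j z m n = \<kappa> * (\<integral>\<alpha>. X2 \<alpha> \<partial>lborel)"
     "TT N (i - 1) j z m n = \<kappa> * (\<integral>\<alpha>. X3 \<alpha> \<partial>lborel)" "TT N i (j - 1) z m n = \<kappa> * (\<integral>\<alpha>. X4 \<alpha> \<partial>lborel)"
    unfolding TT_def X1_def X2_def X3_def X4_def \<kappa>_def by simp_all
  have eqf: "(\<lambda>t. TT N i j (z + of_real t * e) m n) = (\<lambda>t. \<kappa> * (\<integral>\<alpha>. F t \<alpha> \<partial>lborel))"
    unfolding TT_def F_def U_def \<kappa>_def by simp
  show "((\<lambda>t. TT N i j (z + of_real t * e) m n) has_vector_derivative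
         e * (TT N i (Suc j) z m n / of_real N - of_nat i * TT N (i - 1) j z m n) +
         cnj e * (TT N (Suc i) j z m n / of_real N - of_nat j * TT N i (j - 1) z m n)) (at 0)"
    unfolding eqf
    apply (rule has_vector_derivative_eq_rhs[OF has_vector_derivative_mult_right[OF L]])
    unfolding IF' TTs c_def using N by (simp add: field_simps)
qed

lemma sq_pos: "complex_of_real (sqrt (fact m) * sqrt (fact n)) \<noteq> 0"
  by simp

lemma gg_dm:
  "of_nat m * (exp (- (v * cnj v)) * v ^ (m - 1) * cnj v ^ n) / complex_of_real (sqrt (fact m) * sqrt (fact n))
     = of_real (sqrt (real m)) * gg (m - 1) n v"
proof (cases m)
  case 0 then show ?thesis by simp
next
  case (Suc k)
  have f: "sqrt (fact (Suc k)) = sqrt (real (Suc k)) * sqrt (fact k)"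
    by (simp add: real_sqrt_mult fact_Suc del: of_nat_Suc)
  have s: "complex_of_real (real (Suc k)) = of_real (sqrt (real (Suc k))) * of_real (sqrt (real (Suc k)))"
    by (simp only: of_real_mult[symmetric] real_sqrt_mult_self) simp
  have "sqrt (real (Suc k)) \<noteq> 0" by simp
  then show ?thesis unfolding Suc gg_exp f
    using s by (simp add: field_simps del: of_nat_Suc of_real_of_nat_eq) (simp add: field_simps)
qed

lemma gg_dn:
  "of_nat n * (exp (- (v * cnj v)) * v ^ m * cnj v ^ (n - 1)) / complex_of_real (sqrt (fact m) * sqrt (fact n))
     = of_real (sqrt (real n)) * gg m (n - 1) v"
proof (cases n)
  case 0 then show ?thesis by simp
next
  case (Suc k)
  have f: "sqrt (fact (Suc k)) = sqrt (real (Suc k)) * sqrt (fact k)"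
    by (simp add: real_sqrt_mult fact_Suc del: of_nat_Suc)
  have s: "complex_of_real (real (Suc k)) = of_real (sqrt (real (Suc k))) * of_real (sqrt (real (Suc k)))"
    by (simp only: of_real_mult[symmetric] real_sqrt_mult_self) simp
  have "sqrt (real (Suc k)) \<noteq> 0" by simp
  then show ?thesis unfolding Suc gg_exp f
    using s by (simp add: field_simps del: of_nat_Suc of_real_of_nat_eq) (simp add: field_simps)
qed

lemma aux_alg2:
  fixes k e a b c d f z s t :: complex
  shows "k * (e * (- a - cnj z * b + s * c) + cnj e * (- d - z * b + t * f))
    = e * (- (k * a) - cnj z * (k * b) + s * (k * c)) + cnj e * (- (k * d) - z * (k * b) + t * (k * f))"
  by (simp add: algebra_simps)

lemma W2:
  assumes N: "N > 0"
  shows "wirt (\<lambda>z. TT N i j z m n)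
    (\<lambda>z. - TT N i (Suc j) z m n - cnj z * TT N i j z m n + of_real (sqrt (real m)) * TT N i j z (m - 1) n)
    (\<lambda>z. - TT N (Suc i) j z m n - z * TT N i j z m n + of_real (sqrt (real n)) * TT N i j z m (n - 1))"
  unfolding TT_SS[OF N] wirt_def
proof (intro allI)
  fix z e :: complex
  define \<kappa> where "\<kappa> = complex_of_real (1 / (pi * N))"
  define sq where "sq = complex_of_real (sqrt (fact m) * sqrt (fact n))"
  define Q where "Q \<beta> = Kf N \<beta> * \<beta> ^ i * cnj \<beta> ^ j * inverse sq" for \<beta>
  define V where "V t \<beta> = \<beta> + (z + of_real t * e)" for t :: real and \<beta>
  define P where "P v = exp (- (v * cnj v)) * v ^ m * cnj v ^ n" for v
  define P' where "P' v = exp (- (v * cnj v)) * (- (e * cnj v + cnj e * v) * v^m * cnj v^n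
      + of_nat m * e * v^(m-1) * cnj v^n + of_nat n * cnj e * v^m * cnj v^(n-1))" for v
  define F where "F t \<beta> = Kf N \<beta> * \<beta> ^ i * cnj \<beta> ^ j * gg m n (V t \<beta>)" for t \<beta>
  define F' where "F' t \<beta> = Q \<beta> * P' (V t \<beta>)" for t \<beta>
  have FQ: "F t \<beta> = Q \<beta> * P (V t \<beta>)" for t \<beta>
    unfolding F_def Q_def P_def gg_exp sq_def by (simp add: divide_inverse mult_ac)
  have der: "((\<lambda>s. F s \<beta>) has_vector_derivative F' t \<beta>) (at t)" for t \<beta>
  proof -
    let ?v = "\<beta> + z"
    let ?P = "\<lambda>s. exp (- ((?v + s*e) * (cnj ?v + s*cnj e))) * (?v + s*e)^m * (cnj ?v + s*cnj e)^n"
    let ?P' = "\<lambda>s. exp (- ((?v + s*e) * (cnj ?v + s*cnj e))) * (- (e*(cnj ?v + s*cnj e) + cnj e*(?v + s*e)) * (?v + s*e)^m * (cnj ?v + s*cnj e)^n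
      + of_nat m * e * (?v + s*e)^(m-1) * (cnj ?v + s*cnj e)^n + of_nat n * cnj e * (?v + s*e)^m * (cnj ?v + s*cnj e)^(n-1))"
    have "((\<lambda>s. Q \<beta> * ?P s) has_field_derivative Q \<beta> * ?P' (of_real t)) (at (of_real t))"
      by (rule DERIV_cmult, rule deriv_form2)
    from has_vector_derivative_real_field[OF this]
    have *: "((\<lambda>s. Q \<beta> * ?P (of_real s)) has_vector_derivative Q \<beta> * ?P' (of_real t)) (at t)" .
    have Ve: "V s \<beta> = ?v + of_real s * e" for s
      by (simp add: V_def algebra_simps)
    have Vc: "cnj (?v + of_real s * e) = cnj ?v + of_real s * cnj e" for s
      by simp
    show ?thesis
    proof -
      have fe: "(\<lambda>s. F s \<beta>) = (\<lambda>s. Q \<beta> * ?P (of_real s))"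
        by (rule ext) (simp only: FQ P_def Ve Vc)
      have de: "F' t \<beta> = Q \<beta> * ?P' (of_real t)"
        by (simp only: F'_def P'_def Ve Vc)
      show ?thesis unfolding fe de by (rule *)
    qed
  qed
  have intF: "integrable lborel (F t)" for t
    unfolding F_def V_def by (rule int_SS[OF N])
  define Cst where "Cst = norm (1::complex) * (2 * norm e) * BB 1 (m+n+1) + of_nat m * norm e * BB 1 (m-1+n) + of_nat n * norm e * BB 1 (m+(n-1))"
  have nP': "norm (P' v) \<le> Cst" for v
  proof -
    have "P' v = - (Kf 1 v * ((1 * (e * cnj v + cnj e * v)) * v^m * cnj v^n - of_nat m * e * v^(m-1) * cnj v^n
           - of_nat n * cnj e * v^m * cnj v^(n-1)))"
      unfolding P'_def Kf_exp by (simp add: algebra_simps)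
    then have "norm (P' v) = norm (Kf 1 v * ((1 * (e * cnj v + cnj e * v)) * v^m * cnj v^n - of_nat m * e * v^(m-1) * cnj v^n
           - of_nat n * cnj e * v^m * cnj v^(n-1)))"
      by (simp only: norm_minus_cancel)
    also have "\<dots> \<le> Cst" unfolding Cst_def by (rule bound1) simp
    finally show ?thesis .
  qed
  have nQ: "norm (Q \<beta>) \<le> norm (Kf N \<beta> * \<beta> ^ i * cnj \<beta> ^ j)" for \<beta>
  proof -
    have "1 \<le> sqrt (fact m) * sqrt (fact n)"
      using sqrt_fact_ge1[of m] sqrt_fact_ge1[of n] by (metis mult_mono' mult_1 zero_le_one)
    moreover have "norm (inverse sq) = inverse \<bar>sqrt (fact m) * sqrt (fact n)\<bar>"
      unfolding sq_def norm_inverse norm_of_real ..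
    ultimately have "norm (inverse sq) \<le> 1"
      using le_imp_inverse_le[of 1 "sqrt (fact m) * sqrt (fact n)"] by simp
    then show ?thesis unfolding Q_def norm_mult[of _ "inverse sq"]
      by (metis mult.right_neutral mult_left_mono norm_ge_zero)
  qed
  have bnd: "norm (F' t \<beta>) \<le> Cst * norm (Kf N \<beta> * \<beta> ^ i * cnj \<beta> ^ j)" for t \<beta>
  proof -
    have "norm (F' t \<beta>) = norm (Q \<beta>) * norm (P' (V t \<beta>))" unfolding F'_def by (simp add: norm_mult)
    also have "\<dots> \<le> norm (Kf N \<beta> * \<beta> ^ i * cnj \<beta> ^ j) * Cst"
      using nQ nP' by (intro mult_mono) auto
    finally show ?thesis by (simp add: mult.commute)
  qed
  have intG: "integrable lborel (\<lambda>\<beta>. Cst * norm (Kf N \<beta> * \<beta> ^ i * cnj \<beta> ^ j))"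
  proof (intro integrable_mult_right)
    have "norm (Kf N \<beta> * \<beta> ^ i * cnj \<beta> ^ j) = norm \<beta> ^ (i+j) * exp (- ((norm \<beta>)\<^sup>2) / N)" for \<beta>
      by (simp add: norm_mult norm_power norm_Kf power_add)
    then show "integrable lborel (\<lambda>\<beta>. norm (Kf N \<beta> * \<beta> ^ i * cnj \<beta> ^ j))"
      using int_polygauss[OF N, of "i+j"] by simp
  qed
  have measF': "F' 0 \<in> borel_measurable lborel"
    unfolding F'_def Q_def P'_def V_def by measurable
  have L: "((\<lambda>t. \<integral>\<beta>. F t \<beta> \<partial>lborel) has_vector_derivative (\<integral>\<beta>. F' 0 \<beta> \<partial>lborel)) (at 0)"
    by (rule leibniz0[OF intF der bnd intG measF'])
  define Y0 where "Y0 \<beta> = Kf N \<beta> * \<beta> ^ i * cnj \<beta> ^ j * gg m n (\<beta> + z)" for \<beta>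
  define Y1 where "Y1 \<beta> = Kf N \<beta> * \<beta> ^ i * cnj \<beta> ^ Suc j * gg m n (\<beta> + z)" for \<beta>
  define Y2 where "Y2 \<beta> = Kf N \<beta> * \<beta> ^ Suc i * cnj \<beta> ^ j * gg m n (\<beta> + z)" for \<beta>
  define Z1 where "Z1 \<beta> = Kf N \<beta> * \<beta> ^ i * cnj \<beta> ^ j * gg (m - 1) n (\<beta> + z)" for \<beta>
  define Z2 where "Z2 \<beta> = Kf N \<beta> * \<beta> ^ i * cnj \<beta> ^ j * gg m (n - 1) (\<beta> + z)" for \<beta>
  have iY: "integrable lborel Y0" "integrable lborel Y1" "integrable lborel Y2" "integrable lborel Z1" "integrable lborel Z2"
    unfolding Y0_def Y1_def Y2_def Z1_def Z2_def by (rule int_SS[OF N])+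
  have F'0: "F' 0 \<beta> = e * (- Y1 \<beta> - cnj z * Y0 \<beta> + of_real (sqrt (real m)) * Z1 \<beta>)
      + cnj e * (- Y2 \<beta> - z * Y0 \<beta> + of_real (sqrt (real n)) * Z2 \<beta>)" for \<beta>
  proof -
    let ?v = "\<beta> + z"
    have "F' 0 \<beta> = Kf N \<beta> * \<beta> ^ i * cnj \<beta> ^ j * (- (e * cnj ?v + cnj e * ?v) * (P ?v / sq)
       + e * (of_nat m * (exp (- (?v * cnj ?v)) * ?v ^ (m - 1) * cnj ?v ^ n) / sq)
       + cnj e * (of_nat n * (exp (- (?v * cnj ?v)) * ?v ^ m * cnj ?v ^ (n - 1)) / sq))"
      unfolding F'_def Q_def P'_def P_def V_def by (simp add: divide_inverse algebra_simps)
    also have "\<dots> = Kf N \<beta> * \<beta> ^ i * cnj \<beta> ^ j * (- (e * cnj ?v + cnj e * ?v) * gg m n ?v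
       + e * (of_real (sqrt (real m)) * gg (m - 1) n ?v) + cnj e * (of_real (sqrt (real n)) * gg m (n - 1) ?v))"
      unfolding sq_def gg_dm gg_dn P_def gg_exp[of m n] by simp
    also have "\<dots> = e * (- Y1 \<beta> - cnj z * Y0 \<beta> + of_real (sqrt (real m)) * Z1 \<beta>)
      + cnj e * (- Y2 \<beta> - z * Y0 \<beta> + of_real (sqrt (real n)) * Z2 \<beta>)"
      unfolding Y0_def Y1_def Y2_def Z1_def Z2_def by (simp add: algebra_simps)
    finally show ?thesis .
  qed
  have IF': "(\<integral>\<beta>. F' 0 \<beta> \<partial>lborel) = e * (- (\<integral>\<beta>. Y1 \<beta> \<partial>lborel) - cnj z * (\<integral>\<beta>. Y0 \<beta> \<partial>lborel) + of_real (sqrt (real m)) * (\<integral>\<beta>. Z1 \<beta> \<partial>lborel))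
      + cnj e * (- (\<integral>\<beta>. Y2 \<beta> \<partial>lborel) - z * (\<integral>\<beta>. Y0 \<beta> \<partial>lborel) + of_real (sqrt (real n)) * (\<integral>\<beta>. Z2 \<beta> \<partial>lborel))"
    unfolding F'0 using iY by simp
  have SSs: "SS N i j z m n = \<kappa> * (\<integral>\<beta>. Y0 \<beta> \<partial>lborel)" "SS N i (Suc j) z m n = \<kappa> * (\<integral>\<beta>. Y1 \<beta> \<partial>lborel)"
     "SS N (Suc i) j z m n = \<kappa> * (\<integral>\<beta>. Y2 \<beta> \<partial>lborel)"
     "SS N i j z (m - 1) n = \<kappa> * (\<integral>\<beta>. Z1 \<beta> \<partial>lborel)" "SS N i j z m (n - 1) = \<kappa> * (\<integral>\<beta>. Z2 \<beta> \<partial>lborel)"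
    unfolding SS_def Y0_def Y1_def Y2_def Z1_def Z2_def \<kappa>_def by simp_all
  have eqf: "(\<lambda>t. SS N i j (z + of_real t * e) m n) = (\<lambda>t. \<kappa> * (\<integral>\<beta>. F t \<beta> \<partial>lborel))"
    unfolding SS_def F_def V_def \<kappa>_def by simp
  show "((\<lambda>t. SS N i j (z + of_real t * e) m n) has_vector_derivative
         e * (- SS N i (Suc j) z m n - cnj z * SS N i j z m n + of_real (sqrt (real m)) * SS N i j z (m - 1) n) +
         cnj e * (- SS N (Suc i) j z m n - z * SS N i j z m n + of_real (sqrt (real n)) * SS N i j z m (n - 1))) (at 0)"
    unfolding eqf
    apply (rule has_vector_derivative_eq_rhs[OF has_vector_derivative_mult_right[OF L]])
    unfolding IF' SSs by (rule aux_alg2)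
qed

definition ff :: "nat \<Rightarrow> nat \<Rightarrow> complex" where
  "ff q k = of_nat (q choose k) * of_nat (fact k)"

definition cc :: "nat \<Rightarrow> nat \<Rightarrow> nat \<Rightarrow> complex" where
  "cc q p r = (-1) ^ (p - r) * of_nat (p choose r) * ff q (p - r)"

lemma ff_Suc: "ff q (Suc d) = ff q d * of_nat (q - d)"
proof -
  have "(q choose Suc d) * fact (Suc d) = (Suc d * (q choose Suc d)) * fact d"
    by (simp add: fact_Suc algebra_simps)
  also have "\<dots> = ((q - d) * (q choose d)) * fact d"
    by (simp only: binomial_absorption binomial_absorb_comp)
  finally have "(q choose Suc d) * fact (Suc d) = (q choose d) * fact d * (q - d)" by (simp add: mult_ac)
  then have "of_nat ((q choose Suc d) * fact (Suc d)) = (of_nat ((q choose d) * fact d * (q - d)) :: complex)"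
    by (simp only:)
  then show ?thesis unfolding ff_def by (simp only: of_nat_mult)
qed

lemma ff_0[simp]: "ff q 0 = 1" by (simp add: ff_def)

lemma cc_rec:
  assumes "Suc p \<le> q" "r \<le> Suc p"
  shows "cc q (Suc p) r = (if r = 0 then 0 else cc q p (r - 1)) - (if r \<le> p then of_nat (q - p + r) * cc q p r else 0)"
proof (cases r)
  case 0
  have "cc q (Suc p) 0 = - ((-1) ^ p * ff q (Suc p))" by (simp add: cc_def)
  also have "\<dots> = - (of_nat (q - p) * ((-1) ^ p * ff q p))" by (simp add: ff_Suc mult_ac)
  finally show ?thesis using 0 by (simp add: cc_def)
next
  case (Suc r')
  show ?thesis
  proof (cases "r = Suc p")
    case True
    then show ?thesis using Suc by (simp add: cc_def)
  next
    case False
    then have r'p: "Suc r' \<le> p" using Suc assms by simp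
    define d where "d = p - Suc r'"
    have pr: "p - r' = Suc d" using r'p by (simp add: d_def)
    have qd: "q - d = q - p + Suc r'" using r'p assms by (simp add: d_def)
    have pd: "p - Suc r' = d" by (simp add: d_def)
    have "cc q (Suc p) r = (-1) ^ Suc d * (of_nat (p choose r') + of_nat (p choose Suc r')) * ff q (Suc d)"
      using Suc pr by (simp add: cc_def)
    also have "\<dots> = (-1) ^ Suc d * of_nat (p choose r') * ff q (Suc d) - of_nat (q - d) * ((-1) ^ d * of_nat (p choose Suc r') * ff q d)"
      by (simp add: ff_Suc algebra_simps)
    also have "\<dots> = cc q p r' - of_nat (q - p + Suc r') * cc q p (Suc r')"
      unfolding cc_def pr pd qd by simp
    finally show ?thesis using Suc r'p by simp
  qed
qed

lemma comb_step:
  fixes X :: "nat \<Rightarrow> nat \<Rightarrow> complex" and N :: complex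
  assumes "Suc p \<le> q"
  shows "(\<Sum>r\<le>p. cc q p r / N ^ r * (X (q - p + r) (Suc r) / N - of_nat (q - p + r) * X (q - p + r - 1) r))
       = (\<Sum>r\<le>Suc p. cc q (Suc p) r / N ^ r * X (q - Suc p + r) r)"
proof -
  define A where "A r = (if r = 0 then 0 else cc q p (r - 1) / N ^ r * X (q - Suc p + r) r)" for r
  define B where "B r = (if r \<le> p then of_nat (q - p + r) * cc q p r / N ^ r * X (q - Suc p + r) r else 0)" for r
  have "(\<Sum>r\<le>p. cc q p r / N ^ r * (X (q - p + r) (Suc r) / N - of_nat (q - p + r) * X (q - p + r - 1) r))
      = (\<Sum>r\<le>p. A (Suc r)) - (\<Sum>r\<le>p. B r)"
    unfolding sum_subtractf[symmetric]
  proof (intro sum.cong refl)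
    fix r assume "r \<in> {..p}"
    then have r: "r \<le> p" by simp
    have e0: "q - p + r = q - Suc p + Suc r" "q - p + r - 1 = q - Suc p + r" using r assms by auto
    have e1: "X (q - p + r) (Suc r) = X (q - Suc p + Suc r) (Suc r)" "X (q - p + r - 1) r = X (q - Suc p + r) r"
      using e0 by simp_all
    show "cc q p r / N ^ r * (X (q - p + r) (Suc r) / N - of_nat (q - p + r) * X (q - p + r - 1) r) = A (Suc r) - B r"
      unfolding A_def B_def e1 using r by (simp add: algebra_simps add_divide_distrib)
  qed
  also have "(\<Sum>r\<le>p. A (Suc r)) = (\<Sum>r\<le>Suc p. A r)"
    by (simp only: sum.atMost_Suc_shift[of A p]) (simp add: A_def)
  also have "(\<Sum>r\<le>p. B r) = (\<Sum>r\<le>Suc p. B r)"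
    by (simp add: B_def)
  also have "(\<Sum>r\<le>Suc p. A r) - (\<Sum>r\<le>Suc p. B r) = (\<Sum>r\<le>Suc p. cc q (Suc p) r / N ^ r * X (q - Suc p + r) r)"
    unfolding sum_subtractf[symmetric]
  proof (intro sum.cong refl)
    fix r assume "r \<in> {..Suc p}"
    then have r: "r \<le> Suc p" by simp
    show "A r - B r = cc q (Suc p) r / N ^ r * X (q - Suc p + r) r"
      unfolding cc_rec[OF assms r] A_def B_def by (simp add: algebra_simps add_divide_distrib diff_divide_distrib)
  qed
  finally show ?thesis .
qed

lemma coh_up: "of_real (sqrt (real (Suc k))) * coh \<alpha> (Suc k) = \<alpha> * coh \<alpha> k"
proof -
  have f: "sqrt (fact (Suc k)) = sqrt (real (Suc k)) * sqrt (fact k)"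
    by (simp add: real_sqrt_mult fact_Suc del: of_nat_Suc)
  have "sqrt (real (Suc k)) \<noteq> 0" by simp
  then show ?thesis unfolding coh_def f by (simp add: field_simps del: of_nat_Suc)
qed

lemma gg_up1: "of_real (sqrt (real (Suc k))) * gg (Suc k) n \<alpha> = \<alpha> * gg k n \<alpha>"
  unfolding gg_def using coh_up[of k \<alpha>] by (metis mult.assoc)

lemma gg_up2: "of_real (sqrt (real (Suc l))) * gg m (Suc l) \<alpha> = cnj \<alpha> * gg m l \<alpha>"
proof -
  have "cnj (of_real (sqrt (real (Suc l))) * coh \<alpha> (Suc l)) = cnj (\<alpha> * coh \<alpha> l)"
    using coh_up[of l \<alpha>] by simp
  then have "of_real (sqrt (real (Suc l))) * cnj (coh \<alpha> (Suc l)) = cnj \<alpha> * cnj (coh \<alpha> l)"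
    by simp
  then show ?thesis unfolding gg_def by (metis mult.left_commute)
qed

lemma M1:
  assumes N: "N > 0"
  shows "of_real (sqrt (real (Suc k))) * TT N i j z (Suc k) n = TT N (Suc i) j z k n + z * TT N i j z k n"
proof -
  define s where "s = complex_of_real (sqrt (real (Suc k)))"
  define A where "A \<alpha> = Kf N (\<alpha> - z) * (\<alpha> - z) ^ Suc i * cnj (\<alpha> - z) ^ j * gg k n \<alpha>" for \<alpha>
  define B where "B \<alpha> = Kf N (\<alpha> - z) * (\<alpha> - z) ^ i * cnj (\<alpha> - z) ^ j * gg k n \<alpha>" for \<alpha>
  have pt: "s * (Kf N (\<alpha> - z) * (\<alpha> - z) ^ i * cnj (\<alpha> - z) ^ j * gg (Suc k) n \<alpha>) = A \<alpha> + z * B \<alpha>" for \<alpha>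
  proof -
    have "s * (Kf N (\<alpha> - z) * (\<alpha> - z) ^ i * cnj (\<alpha> - z) ^ j * gg (Suc k) n \<alpha>)
       = Kf N (\<alpha> - z) * (\<alpha> - z) ^ i * cnj (\<alpha> - z) ^ j * (s * gg (Suc k) n \<alpha>)" by (simp add: mult_ac)
    also have "\<dots> = Kf N (\<alpha> - z) * (\<alpha> - z) ^ i * cnj (\<alpha> - z) ^ j * (((\<alpha> - z) + z) * gg k n \<alpha>)"
      unfolding s_def gg_up1 by simp
    also have "\<dots> = A \<alpha> + z * B \<alpha>" unfolding A_def B_def by (simp add: algebra_simps)
    finally show ?thesis .
  qed
  have iA: "integrable lborel A" and iB: "integrable lborel B"
    unfolding A_def B_def by (rule int_TT[OF N])+
  have "s * TT N i j z (Suc k) n = complex_of_real (1 / (pi * N)) * (\<integral>\<alpha>. s * (Kf N (\<alpha> - z) * (\<alpha> - z) ^ i * cnj (\<alpha> - z) ^ j * gg (Suc k) n \<alpha>) \<partial>lborel)"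
    unfolding TT_def by simp
  also have "\<dots> = complex_of_real (1 / (pi * N)) * ((\<integral>\<alpha>. A \<alpha> \<partial>lborel) + z * (\<integral>\<alpha>. B \<alpha> \<partial>lborel))"
    unfolding pt using iA iB by simp
  also have "\<dots> = TT N (Suc i) j z k n + z * TT N i j z k n"
    unfolding TT_def A_def B_def by (simp add: algebra_simps)
  finally show ?thesis unfolding s_def .
qed

lemma M2:
  assumes N: "N > 0"
  shows "of_real (sqrt (real (Suc l))) * TT N i j z m (Suc l) = TT N i (Suc j) z m l + cnj z * TT N i j z m l"
proof -
  define s where "s = complex_of_real (sqrt (real (Suc l)))"
  define A where "A \<alpha> = Kf N (\<alpha> - z) * (\<alpha> - z) ^ i * cnj (\<alpha> - z) ^ Suc j * gg m l \<alpha>" for \<alpha>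
  define B where "B \<alpha> = Kf N (\<alpha> - z) * (\<alpha> - z) ^ i * cnj (\<alpha> - z) ^ j * gg m l \<alpha>" for \<alpha>
  have pt: "s * (Kf N (\<alpha> - z) * (\<alpha> - z) ^ i * cnj (\<alpha> - z) ^ j * gg m (Suc l) \<alpha>) = A \<alpha> + cnj z * B \<alpha>" for \<alpha>
  proof -
    have "s * (Kf N (\<alpha> - z) * (\<alpha> - z) ^ i * cnj (\<alpha> - z) ^ j * gg m (Suc l) \<alpha>)
       = Kf N (\<alpha> - z) * (\<alpha> - z) ^ i * cnj (\<alpha> - z) ^ j * (s * gg m (Suc l) \<alpha>)" by (simp add: mult_ac)
    also have "\<dots> = Kf N (\<alpha> - z) * (\<alpha> - z) ^ i * cnj (\<alpha> - z) ^ j * ((cnj (\<alpha> - z) + cnj z) * gg m l \<alpha>)"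
      unfolding s_def gg_up2 by simp
    also have "\<dots> = A \<alpha> + cnj z * B \<alpha>" unfolding A_def B_def by (simp add: algebra_simps del: complex_cnj_diff)
    finally show ?thesis .
  qed
  have iA: "integrable lborel A" and iB: "integrable lborel B"
    unfolding A_def B_def by (rule int_TT[OF N])+
  have "s * TT N i j z m (Suc l) = complex_of_real (1 / (pi * N)) * (\<integral>\<alpha>. s * (Kf N (\<alpha> - z) * (\<alpha> - z) ^ i * cnj (\<alpha> - z) ^ j * gg m (Suc l) \<alpha>) \<partial>lborel)"
    unfolding TT_def by simp
  also have "\<dots> = complex_of_real (1 / (pi * N)) * ((\<integral>\<alpha>. A \<alpha> \<partial>lborel) + cnj z * (\<integral>\<alpha>. B \<alpha> \<partial>lborel))"
    unfolding pt using iA iB by simp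
  also have "\<dots> = TT N i (Suc j) z m l + cnj z * TT N i j z m l"
    unfolding TT_def A_def B_def by (simp add: algebra_simps)
  finally show ?thesis unfolding s_def .
qed

lemma C1:
  assumes N: "N > 0"
  shows "of_real (sqrt (real m)) * TT N 0 j z (m - 1) n - cnj z * TT N 0 j z m n = of_real ((N+1)/N) * TT N 0 (Suc j) z m n"
proof -
  have "(\<lambda>z. TT N 0 (Suc j) z m n / of_real N - of_nat 0 * TT N (0 - 1) j z m n) =
        (\<lambda>z. - TT N 0 (Suc j) z m n - cnj z * TT N 0 j z m n + of_real (sqrt (real m)) * TT N 0 j z (m - 1) n)"
    by (rule wirt_unique(1)[OF W1[OF N] W2[OF N]])
  from fun_cong[OF this, of z]
  have "TT N 0 (Suc j) z m n / of_real N = - TT N 0 (Suc j) z m n - cnj z * TT N 0 j z m n + of_real (sqrt (real m)) * TT N 0 j z (m - 1) n"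
    by simp
  then show ?thesis using N by (simp add: field_simps)
qed

lemma C2:
  assumes N: "N > 0"
  shows "of_real (sqrt (real n)) * TT N i 0 z m (n - 1) - z * TT N i 0 z m n = of_real ((N+1)/N) * TT N (Suc i) 0 z m n"
proof -
  have "(\<lambda>z. TT N (Suc i) 0 z m n / of_real N - of_nat 0 * TT N i (0 - 1) z m n) =
        (\<lambda>z. - TT N (Suc i) 0 z m n - z * TT N i 0 z m n + of_real (sqrt (real n)) * TT N i 0 z m (n - 1))"
    by (rule wirt_unique(2)[OF W1[OF N] W2[OF N]])
  from fun_cong[OF this, of z]
  have "TT N (Suc i) 0 z m n / of_real N = - TT N (Suc i) 0 z m n - z * TT N i 0 z m n + of_real (sqrt (real n)) * TT N i 0 z m (n - 1)"
    by simp
  then show ?thesis using N by (simp add: field_simps)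
qed

definition rann :: "complex \<Rightarrow> (nat \<Rightarrow> complex) \<Rightarrow> nat \<Rightarrow> complex" where
  "rann z x l = (if l = 0 then 0 else of_real (sqrt (real l)) * x (l - 1)) - z * x l"

definition rcre :: "complex \<Rightarrow> (nat \<Rightarrow> complex) \<Rightarrow> nat \<Rightarrow> complex" where
  "rcre z x l = of_real (sqrt (real (l + 1))) * x (l + 1) - cnj z * x l"

lemma cre_col:
  assumes N: "N > 0"
  shows "cre_m z (\<lambda>k. TT N 0 j z k n) = (\<lambda>k. of_real ((N+1)/N) * TT N 0 (Suc j) z k n)"
proof
  fix k
  have "(if k = 0 then 0 else complex_of_real (sqrt (real k)) * TT N 0 j z (k - 1) n) = of_real (sqrt (real k)) * TT N 0 j z (k - 1) n"
    by simp
  then show "cre_m z (\<lambda>k. TT N 0 j z k n) k = of_real ((N+1)/N) * TT N 0 (Suc j) z k n"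
    unfolding cre_m_def using C1[OF N, of k j z n] by simp
qed

lemma ann_col:
  assumes N: "N > 0"
  shows "ann_m z (\<lambda>k. TT N i j z k n) = (\<lambda>k. TT N (Suc i) j z k n)"
  unfolding ann_m_def using M1[OF N] by (simp add: fun_eq_iff)

lemma rann_row:
  assumes N: "N > 0"
  shows "rann z (\<lambda>l. TT N i 0 z m l) = (\<lambda>l. of_real ((N+1)/N) * TT N (Suc i) 0 z m l)"
proof
  fix l
  have "(if l = 0 then 0 else complex_of_real (sqrt (real l)) * TT N i 0 z m (l - 1)) = of_real (sqrt (real l)) * TT N i 0 z m (l - 1)"
    by simp
  then show "rann z (\<lambda>l. TT N i 0 z m l) l = of_real ((N+1)/N) * TT N (Suc i) 0 z m l"
    unfolding rann_def using C2[OF N, of l i z m] by simp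
qed

lemma rcre_row:
  assumes N: "N > 0"
  shows "rcre z (\<lambda>l. TT N i j z m l) = (\<lambda>l. TT N i (Suc j) z m l)"
  unfolding rcre_def using M2[OF N] by (simp add: fun_eq_iff)

lemma cre_lin: "cre_m z (\<lambda>k. c * v k) = (\<lambda>k. c * cre_m z v k)"
  unfolding cre_m_def by (simp add: fun_eq_iff algebra_simps)
lemma ann_lin: "ann_m z (\<lambda>k. c * v k) = (\<lambda>k. c * ann_m z v k)"
  unfolding ann_m_def by (simp add: fun_eq_iff algebra_simps)
lemma rann_lin: "rann z (\<lambda>k. c * v k) = (\<lambda>k. c * rann z v k)"
  unfolding rann_def by (simp add: fun_eq_iff algebra_simps)
lemma rcre_lin: "rcre z (\<lambda>k. c * v k) = (\<lambda>k. c * rcre z v k)"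
  unfolding rcre_def by (simp add: fun_eq_iff algebra_simps)

lemma cre_pow:
  assumes N: "N > 0"
  shows "(cre_m z ^^ r) (\<lambda>k. TT N 0 0 z k n) = (\<lambda>k. of_real ((N+1)/N) ^ r * TT N 0 r z k n)"
proof (induction r)
  case 0 then show ?case by simp
next
  case (Suc r)
  have "(cre_m z ^^ Suc r) (\<lambda>k. TT N 0 0 z k n) = cre_m z (\<lambda>k. of_real ((N+1)/N) ^ r * TT N 0 r z k n)"
    using Suc by simp
  also have "\<dots> = (\<lambda>k. of_real ((N+1)/N) ^ r * cre_m z (\<lambda>k. TT N 0 r z k n) k)" by (rule cre_lin)
  also have "\<dots> = (\<lambda>k. of_real ((N+1)/N) ^ r * (of_real ((N+1)/N) * TT N 0 (Suc r) z k n))"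
    by (simp only: cre_col[OF N])
  finally show ?case by (simp only: power_Suc mult_ac)
qed

lemma ann_pow:
  assumes N: "N > 0"
  shows "(ann_m z ^^ s) (\<lambda>k. c * TT N 0 r z k n) = (\<lambda>k. c * TT N s r z k n)"
proof (induction s)
  case 0 then show ?case by simp
next
  case (Suc s)
  show ?case by (simp add: Suc ann_lin ann_col[OF N])
qed

lemma rann_pow:
  assumes N: "N > 0"
  shows "(rann z ^^ s) (\<lambda>l. TT N 0 0 z m l) = (\<lambda>l. of_real ((N+1)/N) ^ s * TT N s 0 z m l)"
proof (induction s)
  case 0 then show ?case by simp
next
  case (Suc s)
  have "(rann z ^^ Suc s) (\<lambda>l. TT N 0 0 z m l) = rann z (\<lambda>l. of_real ((N+1)/N) ^ s * TT N s 0 z m l)"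
    using Suc by simp
  also have "\<dots> = (\<lambda>l. of_real ((N+1)/N) ^ s * rann z (\<lambda>l. TT N s 0 z m l) l)" by (rule rann_lin)
  also have "\<dots> = (\<lambda>l. of_real ((N+1)/N) ^ s * (of_real ((N+1)/N) * TT N (Suc s) 0 z m l))"
    by (simp only: rann_row[OF N])
  finally show ?case by (simp only: power_Suc mult_ac)
qed

lemma rcre_pow:
  assumes N: "N > 0"
  shows "(rcre z ^^ r) (\<lambda>l. c * TT N s 0 z m l) = (\<lambda>l. c * TT N s r z m l)"
proof (induction r)
  case 0 then show ?case by simp
next
  case (Suc r)
  show ?case by (simp add: Suc rcre_lin rcre_row[OF N])
qed

lemma ann_supp: "(\<forall>l\<ge>B. w l = 0) \<Longrightarrow> \<forall>l\<ge>B. ann_m z w l = 0"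
  unfolding ann_m_def by simp

lemma cre_supp: "(\<forall>l\<ge>B. w l = 0) \<Longrightarrow> \<forall>l\<ge>Suc B. cre_m z w l = 0"
  unfolding cre_m_def by auto

lemma adj_ann:
  assumes w: "\<forall>l\<ge>B. w l = 0" and BM: "B \<le> M"
  shows "(\<Sum>l<M. x l * ann_m z w l) = (\<Sum>l<M. rann z x l * w l)"
proof (cases M)
  case 0 then show ?thesis by simp
next
  case (Suc M')
  have "(\<Sum>l<M. x l * ann_m z w l) = (\<Sum>l<M. x l * (of_real (sqrt (real (Suc l))) * w (Suc l))) - z * (\<Sum>l<M. x l * w l)"
    unfolding ann_m_def by (simp add: algebra_simps sum_subtractf sum_distrib_left)
  also have "(\<Sum>l<M. x l * (of_real (sqrt (real (Suc l))) * w (Suc l))) = (\<Sum>l<M'. x l * (of_real (sqrt (real (Suc l))) * w (Suc l)))"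
    using Suc w BM by simp
  also have "\<dots> = (\<Sum>l<M. (if l = 0 then 0 else of_real (sqrt (real l)) * x (l - 1)) * w l)"
    unfolding Suc sum.lessThan_Suc_shift by (simp add: mult_ac)
  also have "(\<Sum>l<M. (if l = 0 then 0 else of_real (sqrt (real l)) * x (l - 1)) * w l) - z * (\<Sum>l<M. x l * w l)
      = (\<Sum>l<M. rann z x l * w l)"
    unfolding rann_def by (simp add: algebra_simps sum_subtractf sum_distrib_left)
  finally show ?thesis .
qed

lemma adj_cre:
  assumes w: "\<forall>l\<ge>B. w l = 0" and BM: "Suc B \<le> M"
  shows "(\<Sum>l<M. x l * cre_m z w l) = (\<Sum>l<M. rcre z x l * w l)"
proof (cases M)
  case 0 then show ?thesis using BM by simp
next
  case (Suc M')
  have "(\<Sum>l<M. x l * cre_m z w l) = (\<Sum>l<M. x l * (if l = 0 then 0 else of_real (sqrt (real l)) * w (l - 1))) - cnj z * (\<Sum>l<M. x l * w l)"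
    unfolding cre_m_def by (simp add: algebra_simps sum_subtractf sum_distrib_left)
  also have "(\<Sum>l<M. x l * (if l = 0 then 0 else of_real (sqrt (real l)) * w (l - 1))) = (\<Sum>l<M'. x (Suc l) * (of_real (sqrt (real (Suc l))) * w l))"
    unfolding Suc sum.lessThan_Suc_shift by simp
  also have "\<dots> = (\<Sum>l<M. of_real (sqrt (real (Suc l))) * x (Suc l) * w l)"
    using Suc w BM by (simp add: mult_ac)
  also have "(\<Sum>l<M. of_real (sqrt (real (Suc l))) * x (Suc l) * w l) - cnj z * (\<Sum>l<M. x l * w l)
      = (\<Sum>l<M. rcre z x l * w l)"
    unfolding rcre_def by (simp add: algebra_simps sum_subtractf sum_distrib_left)
  finally show ?thesis .
qed

lemma cre_pow_supp: "\<forall>l\<ge>Suc n + r. (cre_m z ^^ r) (basis_vec n) l = 0"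
proof (induction r)
  case 0 then show ?case by (simp add: basis_vec_def)
next
  case (Suc r)
  then show ?case using cre_supp[of "Suc n + r" "(cre_m z ^^ r) (basis_vec n)" z] by simp
qed

lemma ann_pow_supp: "\<forall>l\<ge>B. w l = 0 \<Longrightarrow> \<forall>l\<ge>B. (ann_m z ^^ s) w l = 0"
  by (induction s) (simp_all add: ann_supp)

lemma adj_ann_pow:
  assumes w: "\<forall>l\<ge>B. w l = 0" and BM: "B \<le> M"
  shows "(\<Sum>l<M. x l * (ann_m z ^^ s) w l) = (\<Sum>l<M. (rann z ^^ s) x l * w l)"
  using assms
proof (induction s arbitrary: x)
  case 0 then show ?case by simp
next
  case (Suc s)
  have "(\<Sum>l<M. x l * (ann_m z ^^ Suc s) w l) = (\<Sum>l<M. x l * ann_m z ((ann_m z ^^ s) w) l)" by simp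
  also have "\<dots> = (\<Sum>l<M. rann z x l * (ann_m z ^^ s) w l)"
    by (rule adj_ann[OF ann_pow_supp[OF Suc.prems(1)] Suc.prems(2)])
  also have "\<dots> = (\<Sum>l<M. (rann z ^^ s) (rann z x) l * w l)"
    by (rule Suc.IH[OF Suc.prems])
  finally show ?case by (simp add: funpow_Suc_right del: funpow.simps)
qed

lemma adj_cre_pow:
  assumes "Suc n + r \<le> M"
  shows "(\<Sum>l<M. y l * (cre_m z ^^ r) (basis_vec n) l) = (rcre z ^^ r) y n"
  using assms
proof (induction r arbitrary: y)
  case 0
  have "(\<Sum>l<M. y l * basis_vec n l) = (\<Sum>l\<in>{n}. y l * basis_vec n l)"
    by (rule sum.mono_neutral_right) (use 0 in \<open>auto simp: basis_vec_def\<close>)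
  then show ?case by (simp add: basis_vec_def)
next
  case (Suc r)
  have "(\<Sum>l<M. y l * (cre_m z ^^ Suc r) (basis_vec n) l) = (\<Sum>l<M. y l * cre_m z ((cre_m z ^^ r) (basis_vec n)) l)" by simp
  also have "\<dots> = (\<Sum>l<M. rcre z y l * (cre_m z ^^ r) (basis_vec n) l)"
    by (rule adj_cre[OF cre_pow_supp]) (use Suc.prems in simp)
  also have "\<dots> = (rcre z ^^ r) (rcre z y) n"
    by (rule Suc.IH) (use Suc.prems in simp)
  finally show ?case by (simp add: funpow_Suc_right del: funpow.simps)
qed

lemma Dzb_pow:
  assumes N: "N > 0"
  shows "(Dzb ^^ q) (\<lambda>z. TT N 0 0 z m n) = (\<lambda>z. (1 / of_real N ^ q) * TT N q 0 z m n)"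
proof (induction q)
  case 0 then show ?case by simp
next
  case (Suc q)
  have "(Dzb ^^ Suc q) (\<lambda>z. TT N 0 0 z m n) = Dzb (\<lambda>z. (1 / of_real N ^ q) * TT N q 0 z m n)"
    using Suc by simp
  also have "\<dots> = (\<lambda>z. (1 / of_real N ^ q) * (TT N (Suc q) 0 z m n / of_real N - of_nat 0 * TT N q (0 - 1) z m n))"
    by (rule wirt_D(2)[OF wirt_cmult[OF W1[OF N]]])
  finally show ?case by (simp add: field_simps)
qed

lemma Dz_pow:
  assumes N: "N > 0"
  shows "p \<le> q \<Longrightarrow> (Dz ^^ p) (\<lambda>z. (1 / of_real N ^ q) * TT N q 0 z m n) =
     (\<lambda>z. (1 / of_real N ^ q) * (\<Sum>r\<le>p. cc q p r / of_real N ^ r * TT N (q - p + r) r z m n))"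
proof (induction p)
  case 0 then show ?case by (simp add: cc_def)
next
  case (Suc p)
  then have pq: "p \<le> q" "Suc p \<le> q" by auto
  have "(Dz ^^ Suc p) (\<lambda>z. (1 / of_real N ^ q) * TT N q 0 z m n)
      = Dz (\<lambda>z. (1 / of_real N ^ q) * (\<Sum>r\<le>p. cc q p r / of_real N ^ r * TT N (q - p + r) r z m n))"
    using Suc pq by simp
  also have "\<dots> = (\<lambda>z. (1 / of_real N ^ q) * (\<Sum>r\<le>p. cc q p r / of_real N ^ r *
       (TT N (q - p + r) (Suc r) z m n / of_real N - of_nat (q - p + r) * TT N (q - p + r - 1) r z m n)))"
    by (rule wirt_D(1)[OF wirt_cmult[OF wirt_sum[OF wirt_cmult[OF W1[OF N]]]]])
  also have "\<dots> = (\<lambda>z. (1 / of_real N ^ q) * (\<Sum>r\<le>Suc p. cc q (Suc p) r / of_real N ^ r * TT N (q - Suc p + r) r z m n))"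
    using comb_step[OF pq(2), of "of_real N" "\<lambda>a b. TT N a b _ m n"] by simp
  finally show ?case .
qed

lemma coef_cc:
  assumes "p \<le> q" "r \<le> p"
  shows "coef p q r = cc q p r"
proof -
  have "fact r * fact (p - r) * (p choose r) = (fact p :: nat)"
    by (rule binomial_fact_lemma[OF assms(2)])
  then have "(of_nat (fact p) :: complex) = of_nat (fact r) * (of_nat (fact (p - r)) * of_nat (p choose r))"
    by (metis of_nat_mult mult.assoc)
  then have e: "(of_nat (fact p) :: complex) / of_nat (fact r) = of_nat (p choose r) * of_nat (fact (p - r))"
    by (simp add: field_simps)
  have "coef p q r = (-1)^(p-r) * of_nat (q choose (p-r)) * ((of_nat (fact p) :: complex) / of_nat (fact r))"
    unfolding coef_def using assms by (simp only: min_absorb1 max_absorb2 times_divide_eq_right)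
  also have "\<dots> = cc q p r" unfolding e cc_def ff_def by (simp only: mult_ac)
  finally show ?thesis .
qed

lemma inner_LR:
  assumes N: "N > 0" and M: "Suc n + r \<le> M"
  shows "(\<Sum>j<M. TT N 0 0 z m j * (ann_m z ^^ s) ((cre_m z ^^ r) (basis_vec n)) j)
       = of_real ((N+1)/N) ^ s * TT N s r z m n"
proof -
  have supp: "\<forall>l\<ge>Suc n + r. (cre_m z ^^ r) (basis_vec n) l = 0" by (rule cre_pow_supp)
  have "(\<Sum>j<M. TT N 0 0 z m j * (ann_m z ^^ s) ((cre_m z ^^ r) (basis_vec n)) j)
      = (\<Sum>j<M. (rann z ^^ s) (\<lambda>l. TT N 0 0 z m l) j * (cre_m z ^^ r) (basis_vec n) j)"
    by (rule adj_ann_pow[OF supp M])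
  also have "\<dots> = (\<Sum>j<M. (\<lambda>l. of_real ((N+1)/N) ^ s * TT N s 0 z m l) j * (cre_m z ^^ r) (basis_vec n) j)"
    by (simp only: rann_pow[OF N])
  also have "\<dots> = (rcre z ^^ r) (\<lambda>l. of_real ((N+1)/N) ^ s * TT N s 0 z m l) n"
    by (rule adj_cre_pow[OF M])
  also have "\<dots> = of_real ((N+1)/N) ^ s * TT N s r z m n"
    by (simp add: rcre_pow[OF N])
  finally show ?thesis .
qed

lemma fac_eq:
  assumes N: "N > 0" and "p + s = q + r"
  shows "of_real ((N+1)/N) ^ s / complex_of_real (N ^ p * (N + 1) ^ s) = 1 / (of_real N ^ q * of_real N ^ r)"
proof -
  have "((N+1)/N) ^ s / (N ^ p * (N + 1) ^ s) = 1 / N ^ (p + s)"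
    using N by (simp add: power_divide power_add field_simps)
  also have "\<dots> = 1 / (N ^ q * N ^ r)" using assms(2) by (simp add: power_add)
  finally have "((N+1)/N) ^ s / (N ^ p * (N + 1) ^ s) = 1 / (N ^ q * N ^ r)" .
  then have "complex_of_real (((N+1)/N) ^ s / (N ^ p * (N + 1) ^ s)) = complex_of_real (1 / (N ^ q * N ^ r))"
    by simp
  then show ?thesis by (simp only: of_real_divide of_real_power of_real_mult of_real_1)
qed

lemma alg3:
  fixes a x t d e g :: complex
  assumes "x / d = 1 / (e * g)"
  shows "a * (x * t) / d = (1 / e) * (a / g * t)"
proof -
  have "a * (x * t) / d = a * t * (x / d)" by (simp add: divide_inverse mult_ac)
  also have "\<dots> = (1 / e) * (a / g * t)" unfolding assms by (simp add: divide_inverse mult_ac)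
  finally show ?thesis .
qed

lemma alg4:
  fixes a x t d e g :: complex
  assumes "x / d = 1 / (e * g)"
  shows "a / d * (x * t) = (1 / e) * (a / g * t)"
proof -
  have "a / d * (x * t) = a * t * (x / d)" by (simp add: divide_inverse mult_ac)
  also have "\<dots> = (1 / e) * (a / g * t)" unfolding assms by (simp add: divide_inverse mult_ac)
  finally show ?thesis .
qed

theorem lemma3:
  fixes N :: real and \<zeta> :: complex and p q k :: nat
  assumes "N > 0" and "1 \<le> p + q" and "p + q \<le> k" and "p \<le> q"
  shows "(\<forall>m n. (Dz ^^ p) ((Dzb ^^ q) (\<lambda>z. rho N z m n)) \<zeta>
                 = (\<Sum>j. rho N \<zeta> m j * LR_op N \<zeta> p q (basis_vec n) j))
       \<and> (\<forall>m n. (Dz ^^ p) ((Dzb ^^ q) (\<lambda>z. rho N z m n)) \<zeta>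
                 = LL_op N \<zeta> p q (\<lambda>j. rho N \<zeta> j n) m)"
proof -
  have N: "N > 0" by fact
  have pq: "p \<le> q" by fact
  have mn: "min p q = p" "p - q = 0" using pq by auto
  define RES where "RES m n = (1 / of_real N ^ q) * (\<Sum>r\<le>p. cc q p r / of_real N ^ r * TT N (q - p + r) r \<zeta> m n)" for m n
  have LHS: "(Dz ^^ p) ((Dzb ^^ q) (\<lambda>z. rho N z m n)) \<zeta> = RES m n" for m n
  proof -
    have rhoT: "(\<lambda>z. rho N z m n) = (\<lambda>z. TT N 0 0 z m n)" by (simp add: rho_TT fun_eq_iff)
    show ?thesis unfolding rhoT Dzb_pow[OF N] Dz_pow[OF N pq] RES_def by simp
  qed
  have LL: "LL_op N \<zeta> p q (\<lambda>j. rho N \<zeta> j n) m = RES m n" for m n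
  proof -
    have col: "(\<lambda>j. rho N \<zeta> j n) = (\<lambda>k. TT N 0 0 \<zeta> k n)" by (simp add: rho_TT fun_eq_iff)
    have "LL_op N \<zeta> p q (\<lambda>j. rho N \<zeta> j n) m = (\<Sum>r\<le>p. coef p q r *
         ((ann_m \<zeta> ^^ (r + (q - p))) ((cre_m \<zeta> ^^ r) (\<lambda>k. TT N 0 0 \<zeta> k n))) m
         / complex_of_real (N ^ q * (N + 1) ^ r))"
      unfolding LL_op_def col mn atLeast0AtMost by simp
    also have "\<dots> = (\<Sum>r\<le>p. (1 / of_real N ^ q) * (cc q p r / of_real N ^ r * TT N (q - p + r) r \<zeta> m n))"
    proof (intro sum.cong refl)
      fix r assume "r \<in> {..p}"
      then have r: "r \<le> p" by simp
      have t: "((ann_m \<zeta> ^^ (r + (q - p))) ((cre_m \<zeta> ^^ r) (\<lambda>k. TT N 0 0 \<zeta> k n))) m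
           = of_real ((N+1)/N) ^ r * TT N (q - p + r) r \<zeta> m n"
        unfolding cre_pow[OF N] ann_pow[OF N] by (simp add: add.commute)
      have f: "of_real ((N+1)/N) ^ r / complex_of_real (N ^ q * (N + 1) ^ r) = 1 / (of_real N ^ q * of_real N ^ r)"
        by (rule fac_eq[OF N]) simp
      show "coef p q r * ((ann_m \<zeta> ^^ (r + (q - p))) ((cre_m \<zeta> ^^ r) (\<lambda>k. TT N 0 0 \<zeta> k n))) m
         / complex_of_real (N ^ q * (N + 1) ^ r) = (1 / of_real N ^ q) * (cc q p r / of_real N ^ r * TT N (q - p + r) r \<zeta> m n)"
        unfolding t coef_cc[OF pq r] by (rule alg3[OF f])
    qed
    also have "\<dots> = RES m n" unfolding RES_def by (simp add: sum_distrib_left)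
    finally show ?thesis .
  qed
  have LR: "(\<Sum>j. rho N \<zeta> m j * LR_op N \<zeta> p q (basis_vec n) j) = RES m n" for m n
  proof -
    define M where "M = Suc n + p"
    define W where "W r = (ann_m \<zeta> ^^ (r + (q - p))) ((cre_m \<zeta> ^^ r) (basis_vec n))" for r
    have LRe: "LR_op N \<zeta> p q (basis_vec n) j = (\<Sum>r\<le>p. coef p q r * W r j / complex_of_real (N ^ p * (N + 1) ^ (r + (q - p))))" for j
      unfolding LR_op_def W_def mn atLeast0AtMost by simp
    have Wz: "W r j = 0" if "r \<le> p" "j \<ge> M" for r j
    proof -
      have "\<forall>l\<ge>M. (cre_m \<zeta> ^^ r) (basis_vec n) l = 0"
        using cre_pow_supp[of n r \<zeta>] that(1) unfolding M_def by auto
      from ann_pow_supp[OF this] show ?thesis using that unfolding W_def by blast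
    qed
    have "(\<Sum>j. rho N \<zeta> m j * LR_op N \<zeta> p q (basis_vec n) j) = (\<Sum>j<M. rho N \<zeta> m j * LR_op N \<zeta> p q (basis_vec n) j)"
      by (rule suminf_finite) (auto simp: LRe Wz)
    also have "\<dots> = (\<Sum>j<M. \<Sum>r\<le>p. coef p q r / complex_of_real (N ^ p * (N + 1) ^ (r + (q - p))) * (TT N 0 0 \<zeta> m j * W r j))"
      unfolding LRe rho_TT sum_distrib_left by (intro sum.cong refl) (simp add: field_simps del: of_real_mult of_real_power)
    also have "\<dots> = (\<Sum>r\<le>p. coef p q r / complex_of_real (N ^ p * (N + 1) ^ (r + (q - p))) * (\<Sum>j<M. TT N 0 0 \<zeta> m j * W r j))"
      by (simp add: sum.swap[of _ "{..<M}"] sum_distrib_left)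
    also have "\<dots> = (\<Sum>r\<le>p. (1 / of_real N ^ q) * (cc q p r / of_real N ^ r * TT N (q - p + r) r \<zeta> m n))"
    proof (intro sum.cong refl)
      fix r assume "r \<in> {..p}"
      then have r: "r \<le> p" by simp
      have t: "(\<Sum>j<M. TT N 0 0 \<zeta> m j * W r j) = of_real ((N+1)/N) ^ (r + (q - p)) * TT N (q - p + r) r \<zeta> m n"
        unfolding W_def using inner_LR[OF N, of n r M \<zeta> m "r + (q - p)"] r by (simp add: M_def add.commute)
      have f: "of_real ((N+1)/N) ^ (r + (q - p)) / complex_of_real (N ^ p * (N + 1) ^ (r + (q - p))) = 1 / (of_real N ^ q * of_real N ^ r)"
        by (rule fac_eq[OF N]) (use pq in simp)
      show "coef p q r / complex_of_real (N ^ p * (N + 1) ^ (r + (q - p))) * (\<Sum>j<M. TT N 0 0 \<zeta> m j * W r j)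
         = (1 / of_real N ^ q) * (cc q p r / of_real N ^ r * TT N (q - p + r) r \<zeta> m n)"
        unfolding t coef_cc[OF pq r] by (rule alg4[OF f])
    qed
    also have "\<dots> = RES m n" unfolding RES_def by (simp add: sum_distrib_left)
    finally show ?thesis .
  qed
  show ?thesis using LHS LL LR by simp
qed

end
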